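(* Let $H,\mathcal{N}\in C^\infty(\mathbb{R}^{2n})$ with $\mathcal{N}>0$, and consider on $\mathbb{R}^{2n}$ with coordinates $(q,p)\in\mathbb{R}^n\times\mathbb{R}^n$ and symplectic form $\Omega=\mathrm{d}q\wedge\mathrm{d}p$ the conformally Hamiltonian system $\dot q=\mathcal{N}\,\partial H/\partial p$, $\dot p=-\mathcal{N}\,\partial H/\partial q$. For $E\in\mathbb{R}$ let $K_E=\mathcal{N}(H-E)$ (the altered Hamiltonian), and let $\Psi_{h,E}:\mathbb{R}^{2n}\to\mathbb{R}^{2n}$ be a symplectic integrator with step size $h$ applied to the Hamiltonian system with Hamiltonian $K_E$, whose modified Hamiltonian is the formal power series $K_{mod}(q,p;h,E)=K_E(q,p)+hK_1(q,p;E)+h^2K_2(q,p;E)+\cdots$, with truncations $K^{(\ell)}_{mod}=K_E+hK_1+\dots+h^\ell K_\ell$. Let $\mathcal{E}(q,p;h)=H(q,p)+h\mathcal{E}_1(q,p)+h^2\mathcal{E}_2(q,p)+\cdots$ be the formal power series (modified conformal Hamiltonian) defined by $K_{mod}(q,p;h,\mathcal{E}(q,p;h))=0$, with truncations $\mathcal{E}^{(\ell)}=H+h\mathcal{E}_1+\dots+h^\ell\mathcal{E}_\ell$. Fix $\ell\in\mathbb{N}$ and define $\Phi^{(\ell)}_h(q,p)=\Psi_{h,\mathcal{E}^{(\ell)}(q,p;h)}(q,p)$. Then $$\Phi^{(\ell)}_h(q(t),p(t))=(q(t+h),p(t+h))+\mathcal{O}(h^{\ell+2})$$ for any solution $(q(t),p(t))$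 of $$\dot q=-\frac{\partial K^{(\ell)}_{mod}}{\partial E}\big(q,p;h,\mathcal{E}^{(\ell)}(q,p;h)\big)\frac{\partial\mathcal{E}^{(\ell)}}{\partial p}(q,p;h),\qquad \dot p=\frac{\partial K^{(\ell)}_{mod}}{\partial E}\big(q,p;h,\mathcal{E}^{(\ell)}(q,p;h)\big)\frac{\partial\mathcal{E}^{(\ell)}}{\partial q}(q,p;h).$$ Moreover, for sufficiently small $h$ this system is conformally Hamiltonian, with Hamiltonian $\mathcal{E}^{(\ell)}(\cdot;h)$ and conformal factor $\mathcal{N}^{(\ell)}_{mod}(q,p;h)=-\frac{\partial K^{(\ell)}_{mod}}{\partial E}\big(q,p;h,\mathcal{E}^{(\ell)}(q,p;h)\big)$.
   Context: A consistent numerical integrator for a vector field $f$ is a family of maps $\Psi_h$ with $\Psi_h(x)=x+hf(x)+\mathcal{O}(h^2)$; it is symplectic if, when applied to Hamiltonian vector fields, $\Psi_h^*\Omega=\Omega$. For a symplectic integrator applied to a Hamiltonian system with Hamiltonian $K$, the modified Hamiltonian is a formal power series $K+hK_1+h^2K_2+\cdots$ such that, for each $\ell$, solutions $x(t)$ of the Hamiltonian system with Hamiltonian given by its truncation after the $h^\ell$ term satisfy $\Psi_h(x(t))=x(t+h)+\mathcal{O}(h^{\ell+2})$. The series $\mathcal{E}$ exists as a formal power series by the implicit function theorem applied order by order (since $\partial K_E/\partial E=-\mathcal{N}\neq0$), and its truncation satisfies $K^{(\ell)}_{mod}(q,p;h,\mathcal{E}^{(\ell)}(q,p;h))=\mathcal{O}(h^{\ell+1})$.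 A vector field $X$ is conformally Hamiltonian with Hamiltonian $F$ and conformal factor $M>0$ if $\mathbf{i}_X\Omega=M\,\mathrm{d}F$, i.e. $\dot q=M\,\partial F/\partial p$, $\dot p=-M\,\partial F/\partial q$. *)

theory Defs
  imports "HOL-Analysis.Analysis"
begin

fun Ck :: "nat \<Rightarrow> ('a::euclidean_space \<Rightarrow> real) \<Rightarrow> bool" where
  "Ck 0 f = continuous_on UNIV f"
| "Ck (Suc k) f = ((\<forall>x. f differentiable (at x)) \<and>
                    (\<forall>v. Ck k (\<lambda>x. frechet_derivative f (at x) v)))"

definition smooth :: "('a::euclidean_space \<Rightarrow> real) \<Rightarrow> bool" where
  "smooth f \<longleftrightarrow> (\<forall>k. Ck k f)"

definition dq :: "((real^'n) \<times> (real^'n) \<Rightarrow> real) \<Rightarrow> (real^'n) \<times> (real^'n) \<Rightarrow> real^'n" where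
  "dq F x = (\<chi> i. frechet_derivative F (at x) (axis i 1, 0))"

definition dp :: "((real^'n) \<times> (real^'n) \<Rightarrow> real) \<Rightarrow> (real^'n) \<times> (real^'n) \<Rightarrow> real^'n" where
  "dp F x = (\<chi> i. frechet_derivative F (at x) (0, axis i 1))"

definition ham_field :: "((real^'n) \<times> (real^'n) \<Rightarrow> real) \<Rightarrow> (real^'n) \<times> (real^'n) \<Rightarrow> (real^'n) \<times> (real^'n)" where
  "ham_field K x = (dp K x, - dq K x)"

definition symp_form :: "(real^'n) \<times> (real^'n) \<Rightarrow> (real^'n) \<times> (real^'n) \<Rightarrow> real" where
  "symp_form u v = fst u \<bullet> snd v - snd u \<bullet> fst v"

definition conf_hamiltonian_on ::
  "((real^'n) \<times> (real^'n) \<Rightarrow> (real^'n) \<times> (real^'n)) \<Rightarrow> ((real^'n) \<times> (real^'n) \<Rightarrow> real)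
   \<Rightarrow> ((real^'n) \<times> (real^'n) \<Rightarrow> real) \<Rightarrow> ((real^'n) \<times> (real^'n)) set \<Rightarrow> bool" where
  "conf_hamiltonian_on X F M U \<longleftrightarrow>
     (\<forall>x\<in>U. M x > 0 \<and> X x = (M x *\<^sub>R dp F x, - (M x *\<^sub>R dq F x)))"

definition solves_on :: "('a::real_normed_vector \<Rightarrow> 'a) \<Rightarrow> (real \<Rightarrow> 'a) \<Rightarrow> real set \<Rightarrow> bool" where
  "solves_on X y T \<longleftrightarrow> (\<forall>s\<in>T. (y has_vector_derivative X (y s)) (at s within T))"

definition Kt :: "((real^'n) \<times> (real^'n) \<Rightarrow> real) \<Rightarrow> ((real^'n) \<times> (real^'n) \<Rightarrow> real)
   \<Rightarrow> (nat \<Rightarrow> (real^'n) \<times> (real^'n) \<Rightarrow> real \<Rightarrow> real) \<Rightarrow> nat \<Rightarrow> real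
   \<Rightarrow> (real^'n) \<times> (real^'n) \<Rightarrow> real \<Rightarrow> real" where
  "Kt H N K l h x E = N x * (H x - E) + (\<Sum>j=1..l. h ^ j * K j x E)"

definition Et :: "((real^'n) \<times> (real^'n) \<Rightarrow> real) \<Rightarrow> (nat \<Rightarrow> (real^'n) \<times> (real^'n) \<Rightarrow> real)
   \<Rightarrow> nat \<Rightarrow> real \<Rightarrow> (real^'n) \<times> (real^'n) \<Rightarrow> real" where
  "Et H Ec l h x = H x + (\<Sum>j=1..l. h ^ j * Ec j x)"

definition symplectic_integrator ::
  "((real^'n) \<times> (real^'n) \<Rightarrow> real) \<Rightarrow> ((real^'n) \<times> (real^'n) \<Rightarrow> real)
   \<Rightarrow> (real \<Rightarrow> real \<Rightarrow> (real^'n) \<times> (real^'n) \<Rightarrow> (real^'n) \<times> (real^'n)) \<Rightarrow> bool" where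
  "symplectic_integrator H N Psi \<longleftrightarrow>
     (\<forall>x0 E0. \<exists>C \<delta>. \<delta> > 0 \<and>
        (\<forall>h x E. 0 < h \<and> h < \<delta> \<and> dist x x0 < \<delta> \<and> \<bar>E - E0\<bar> < \<delta> \<longrightarrow>
           norm (Psi h E x - (x + h *\<^sub>R ham_field (\<lambda>w. N w * (H w - E)) x)) \<le> C * h\<^sup>2)) \<and>
     (\<forall>h E. 0 < h \<longrightarrow>
        (\<forall>x. Psi h E differentiable (at x) \<and>
             (\<forall>u v. symp_form (frechet_derivative (Psi h E) (at x) u)
                               (frechet_derivative (Psi h E) (at x) v) = symp_form u v)))"

definition is_modified_hamiltonian ::
  "((real^'n) \<times> (real^'n) \<Rightarrow> real) \<Rightarrow> ((real^'n) \<times> (real^'n) \<Rightarrow> real)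
   \<Rightarrow> (nat \<Rightarrow> (real^'n) \<times> (real^'n) \<Rightarrow> real \<Rightarrow> real)
   \<Rightarrow> (real \<Rightarrow> real \<Rightarrow> (real^'n) \<times> (real^'n) \<Rightarrow> (real^'n) \<times> (real^'n)) \<Rightarrow> bool" where
  "is_modified_hamiltonian H N K Psi \<longleftrightarrow>
     (\<forall>m x0 E0. \<exists>C \<delta>. \<delta> > 0 \<and>
        (\<forall>h x E t y. 0 < h \<and> h < \<delta> \<and> dist x x0 < \<delta> \<and> \<bar>E - E0\<bar> < \<delta> \<and>
            solves_on (ham_field (\<lambda>w. Kt H N K m h w E)) y {t..t+h} \<and> y t = x \<longrightarrow>
            norm (Psi h E x - y (t + h)) \<le> C * h ^ (m + 2)))"

text \<open>E = H + h E_1 + h^2 E_2 + ... solves K_mod(x;h,E(x;h)) = 0 as a formal power series in h: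
  for every order m, the Taylor coefficients of order 0..m at h = 0 of
  h \<mapsto> K^(m)_mod(x;h,E^(m)(x;h)) vanish (these coefficients only involve K_j, E_j with j \<le> m).\<close>
definition modified_conformal_hamiltonian ::
  "((real^'n) \<times> (real^'n) \<Rightarrow> real) \<Rightarrow> ((real^'n) \<times> (real^'n) \<Rightarrow> real)
   \<Rightarrow> (nat \<Rightarrow> (real^'n) \<times> (real^'n) \<Rightarrow> real \<Rightarrow> real)
   \<Rightarrow> (nat \<Rightarrow> (real^'n) \<times> (real^'n) \<Rightarrow> real) \<Rightarrow> bool" where
  "modified_conformal_hamiltonian H N K Ec \<longleftrightarrow>
     (\<forall>m k x. k \<le> m \<longrightarrow> (deriv ^^ k) (\<lambda>h. Kt H N K m h x (Et H Ec m h x)) 0 = 0)"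


definition Nmod :: "((real^'n) \<times> (real^'n) \<Rightarrow> real) \<Rightarrow> ((real^'n) \<times> (real^'n) \<Rightarrow> real)
   \<Rightarrow> (nat \<Rightarrow> (real^'n) \<times> (real^'n) \<Rightarrow> real \<Rightarrow> real) \<Rightarrow> (nat \<Rightarrow> (real^'n) \<times> (real^'n) \<Rightarrow> real)
   \<Rightarrow> nat \<Rightarrow> real \<Rightarrow> (real^'n) \<times> (real^'n) \<Rightarrow> real" where
  "Nmod H N K Ec l h x = - deriv (\<lambda>E. Kt H N K l h x E) (Et H Ec l h x)"

definition mod_field :: "((real^'n) \<times> (real^'n) \<Rightarrow> real) \<Rightarrow> ((real^'n) \<times> (real^'n) \<Rightarrow> real)
   \<Rightarrow> (nat \<Rightarrow> (real^'n) \<times> (real^'n) \<Rightarrow> real \<Rightarrow> real) \<Rightarrow> (nat \<Rightarrow> (real^'n) \<times> (real^'n) \<Rightarrow> real)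
   \<Rightarrow> nat \<Rightarrow> real \<Rightarrow> (real^'n) \<times> (real^'n) \<Rightarrow> (real^'n) \<times> (real^'n)" where
  "mod_field H N K Ec l h x =
     (- deriv (\<lambda>E. Kt H N K l h x E) (Et H Ec l h x) *\<^sub>R dp (Et H Ec l h) x,
      deriv (\<lambda>E. Kt H N K l h x E) (Et H Ec l h x) *\<^sub>R dq (Et H Ec l h) x)"

end

theory Submission
  imports Defs
begin


abbreviation fd where "fd f x \<equiv> frechet_derivative f (at x)"

lemma fd_eq: "(f has_derivative f') (at x) \<Longrightarrow> fd f x = f'"
  using frechet_derivative_at by metis

lemma fd_works: "f differentiable (at x) \<Longrightarrow> (f has_derivative fd f x) (at x)"
  using frechet_derivative_works by blast

lemma Ck_Suc_D:
  "Ck (Suc k) f \<Longrightarrow> f differentiable (at x)"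
  "Ck (Suc k) f \<Longrightarrow> Ck k (\<lambda>x. fd f x v)"
  by auto

lemma Ck_mono: "Ck (Suc k) f \<Longrightarrow> Ck k f"
proof (induction k arbitrary: f)
  case 0
  then show ?case
    by (auto intro!: differentiable_imp_continuous_on simp: differentiable_on_def)
next
  case (Suc k)
  then show ?case by auto
qed

lemma Ck_le: "Ck m f \<Longrightarrow> k \<le> m \<Longrightarrow> Ck k f"
proof (induction m)
  case 0 then show ?case by simp
next
  case (Suc m) then show ?case by (metis Ck_mono le_Suc_eq)
qed

lemma smooth_Ck: "smooth f \<Longrightarrow> Ck k f"
  by (simp add: smooth_def)

lemma smooth_diff_at: "smooth f \<Longrightarrow> f differentiable (at x)"
  using smooth_Ck[of f 1] by auto

lemma smooth_fd: "smooth f \<Longrightarrow> smooth (\<lambda>x. fd f x v)"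
  unfolding smooth_def by (metis Ck.simps(2))

lemma smooth_cont: "smooth f \<Longrightarrow> continuous_on S f"
  using smooth_Ck[of f 0] continuous_on_subset by auto

lemma smooth_isCont: "smooth f \<Longrightarrow> isCont f x"
  using smooth_Ck[of f 0] continuous_on_eq_continuous_at[of UNIV f] by auto

lemma Ck_const: "Ck k (\<lambda>x. c)"
proof (induction k arbitrary: c)
  case 0 then show ?case by simp
next
  case (Suc k) then show ?case by simp
qed

lemma Ck_add: "Ck k f \<Longrightarrow> Ck k g \<Longrightarrow> Ck k (\<lambda>x. f x + g x)"
proof (induction k arbitrary: f g)
  case 0 then show ?case by (auto intro!: continuous_intros)
next
  case (Suc k)
  have "fd (\<lambda>x. f x + g x) x = (\<lambda>v. fd f x v + fd g x v)" for x
    using Suc.prems by (intro fd_eq) (auto intro!: derivative_eq_intros fd_works)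
  with Suc show ?case by auto
qed

lemma Ck_scale: "Ck k f \<Longrightarrow> Ck k (\<lambda>x. c * f x)"
proof (induction k arbitrary: f)
  case 0 then show ?case by (auto intro!: continuous_intros)
next
  case (Suc k)
  have "fd (\<lambda>x. c * f x) x = (\<lambda>v. c * fd f x v)" for x
    using Suc.prems by (intro fd_eq) (auto intro!: derivative_eq_intros fd_works)
  with Suc show ?case by auto
qed

lemma Ck_minus: "Ck k f \<Longrightarrow> Ck k (\<lambda>x. - f x)"
  using Ck_scale[of k f "-1"] by simp

lemma Ck_diff: "Ck k f \<Longrightarrow> Ck k g \<Longrightarrow> Ck k (\<lambda>x. f x - g x)"
  using Ck_add[of k f "\<lambda>x. - g x"] Ck_minus[of k g] by simp

lemma Ck_mult: "Ck k f \<Longrightarrow> Ck k g \<Longrightarrow> Ck k (\<lambda>x. f x * g x)"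
proof (induction k arbitrary: f g)
  case 0 then show ?case by (auto intro!: continuous_intros)
next
  case (Suc k)
  have "fd (\<lambda>x. f x * g x) x = (\<lambda>v. f x * fd g x v + fd f x v * g x)" for x
    using Suc.prems by (intro fd_eq) (auto intro!: derivative_eq_intros fd_works)
  moreover have "Ck k (\<lambda>x. f x * fd g x v + fd f x v * g x)" for v
    using Suc.prems Ck_mono[OF Suc.prems(1)] Ck_mono[OF Suc.prems(2)]
    by (intro Ck_add Suc.IH) auto
  ultimately show ?case using Suc.prems by auto
qed

lemma Ck_sum: "finite A \<Longrightarrow> (\<And>j. j \<in> A \<Longrightarrow> Ck k (f j)) \<Longrightarrow> Ck k (\<lambda>x. \<Sum>j\<in>A. f j x)"
proof (induction A rule: finite_induct)
  case empty then show ?case by (simp add: Ck_const)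
next
  case (insert a A) then show ?case using Ck_add[of k "f a" "\<lambda>x. \<Sum>j\<in>A. f j x"] by simp
qed

lemma Ck_linear: "linear (P :: 'a::euclidean_space \<Rightarrow> real) \<Longrightarrow> Ck k P"
proof (induction k)
  case 0 then show ?case by (simp add: linear_continuous_on linear_conv_bounded_linear)
next
  case (Suc k)
  have fdP: "fd P x = P" for x
    by (rule fd_eq[OF linear_imp_has_derivative[OF Suc.prems]])
  have "P differentiable (at x)" for x
    using Suc.prems linear_imp_differentiable by blast
  moreover have "Ck k (\<lambda>x. fd P x v)" for v
    unfolding fdP by (rule Ck_const)
  ultimately show ?case by simp
qed

lemma Ck_power: "Ck k f \<Longrightarrow> Ck k (\<lambda>x. f x ^ j)"
proof (induction j)
  case 0 then show ?case by (simp add: Ck_const)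
next
  case (Suc j) then show ?case using Ck_mult[OF Suc.prems Suc.IH] by simp
qed

lemma Ck_linear_comp:
  fixes P :: "'a::euclidean_space \<Rightarrow> 'b::euclidean_space"
  assumes "linear P"
  shows "Ck k f \<Longrightarrow> Ck k (\<lambda>x. f (P x))"
proof (induction k arbitrary: f)
  case 0
  have "continuous_on UNIV P" using assms by (simp add: linear_continuous_on linear_conv_bounded_linear)
  then show ?case
    using 0 continuous_on_compose2[of UNIV f UNIV P] by auto
next
  case (Suc k)
  have "fd (\<lambda>x. f (P x)) x = (\<lambda>v. fd f (P x) (P v))" for x
    using diff_chain_at[OF linear_imp_has_derivative[OF assms] fd_works[of f "P x"]] Suc.prems
    by (intro fd_eq) (auto simp: o_def)
  moreover have "(\<lambda>x. f (P x)) differentiable (at x)" for x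
    using diff_chain_at[OF linear_imp_has_derivative[OF assms] fd_works[of f "P x"]] Suc.prems
    by (auto simp: o_def differentiable_def)
  moreover have "Ck k (\<lambda>x. fd f (P x) (P v))" for v
    using Suc.IH[of "\<lambda>y. fd f y (P v)"] Suc.prems by simp
  ultimately show ?case by simp
qed

lemma Ck_comp2:
  fixes P :: "'a::euclidean_space \<Rightarrow> 'b::euclidean_space"
    and F :: "'b \<times> real \<Rightarrow> real"
  assumes "linear P"
  shows "Ck k F \<Longrightarrow> Ck k e \<Longrightarrow> Ck k (\<lambda>z. F (P z, e z))"
proof (induction k arbitrary: F e)
  case 0
  have "continuous_on UNIV P" using assms by (simp add: linear_continuous_on linear_conv_bounded_linear)
  then have "continuous_on UNIV (\<lambda>z. (P z, e z))" using 0 by (auto intro!: continuous_intros)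
  then show ?case
    using 0 continuous_on_compose2[of UNIV F UNIV "\<lambda>z. (P z, e z)"] by auto
next
  case (Suc k)
  have dF: "(F has_derivative fd F y) (at y)" for y using Ck_Suc_D(1)[OF Suc.prems(1)] by (rule fd_works)
  have de: "(e has_derivative fd e z) (at z)" for z using Suc.prems by (auto intro: fd_works)
  have lin: "linear (fd F y)" for y using dF has_derivative_linear by blast
  have dP: "(P has_derivative P) (at z)" for z using assms linear_imp_has_derivative by blast
  have D: "((\<lambda>z. F (P z, e z)) has_derivative (\<lambda>v. fd F (P z, e z) (P v, fd e z v))) (at z)" for z
  proof -
    have "((\<lambda>z. (P z, e z)) has_derivative (\<lambda>v. (P v, fd e z v))) (at z)"
      using dP de by (rule has_derivative_Pair)
    from diff_chain_at[OF this dF]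
    show ?thesis by (simp add: o_def)
  qed
  have split: "fd F y (a, b) = fd F y (a, 0) + b * fd F y (0, 1)" for y a b
  proof -
    have "fd F y (a, b) = fd F y ((a, 0) + b *\<^sub>R (0, 1))" by simp
    also have "\<dots> = fd F y (a, 0) + fd F y (b *\<^sub>R (0, 1))"
      using lin[of y] by (rule linear_add)
    also have "\<dots> = fd F y (a, 0) + b * fd F y (0, 1)"
      using lin[of y] by (simp only: linear_scale real_scaleR_def)
    finally show ?thesis .
  qed
  have "Ck k (\<lambda>z. fd F (P z, e z) (P v, 0) + fd e z v * fd F (P z, e z) (0, 1))" for v
  proof (intro Ck_add Ck_mult)
    show "Ck k (\<lambda>z. fd F (P z, e z) (P v, 0))"
      using Suc.IH[of "\<lambda>y. fd F y (P v, 0)" e] Suc.prems Ck_mono by auto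
    show "Ck k (\<lambda>z. fd F (P z, e z) (0, 1))"
      using Suc.IH[of "\<lambda>y. fd F y (0, 1)" e] Suc.prems Ck_mono by auto
    show "Ck k (\<lambda>z. fd e z v)" using Suc.prems by auto
  qed
  moreover have "fd (\<lambda>z. F (P z, e z)) z = (\<lambda>v. fd F (P z, e z) (P v, fd e z v))" for z
    using D by (rule fd_eq)
  moreover have "(\<lambda>z. F (P z, e z)) differentiable (at z)" for z
    using D differentiable_def by blast
  moreover have "(\<lambda>z. fd F (P z, e z) (P v, fd e z v)) = (\<lambda>z. fd F (P z, e z) (P v, 0) + fd e z v * fd F (P z, e z) (0, 1))" for v
    using split by blast
  ultimately show ?case by simp
qed

lemma Ck_inverse:
  assumes pos: "\<forall>x. N x > (0::real)"
  shows "Ck k N \<Longrightarrow> Ck k (\<lambda>x. 1 / N x)"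
proof (induction k)
  case 0
  have "\<And>x. N x \<noteq> 0" using pos by (metis less_irrefl)
  then show ?case using 0 by (auto intro!: continuous_intros)
next
  case (Suc k)
  have d: "((\<lambda>x. 1 / N x) has_derivative (\<lambda>v. - fd N x v * (1 / N x) * (1 / N x))) (at x)" for x
    using Suc.prems pos[rule_format, of x]
    by (auto intro!: derivative_eq_intros fd_works simp: field_simps power2_eq_square)
  have "Ck k (\<lambda>x. - fd N x v * (1 / N x) * (1 / N x))" for v
    using Suc.IH[OF Ck_mono[OF Suc.prems]] Ck_Suc_D(2)[OF Suc.prems]
    by (intro Ck_mult Ck_minus)
  moreover have "fd (\<lambda>x. 1 / N x) x = (\<lambda>v. - fd N x v * (1 / N x) * (1 / N x))" for x
    using d by (rule fd_eq)
  ultimately show ?case using d by (auto simp: differentiable_def)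
qed




lemma LD:
  fixes G :: "'a::euclidean_space \<Rightarrow> real"
  assumes "G differentiable (at (p + t *\<^sub>R v))"
  shows "((\<lambda>t. G (p + t *\<^sub>R v)) has_real_derivative fd G (p + t *\<^sub>R v) v) (at t)"
proof -
  have lin: "linear (fd G (p + t *\<^sub>R v))" using assms by (rule linear_frechet_derivative)
  have "((\<lambda>t. p + t *\<^sub>R v) has_derivative (\<lambda>s. s *\<^sub>R v)) (at t)"
    by (auto intro!: derivative_eq_intros)
  from diff_chain_at[OF this fd_works[OF assms]]
  have "((\<lambda>t. G (p + t *\<^sub>R v)) has_derivative (\<lambda>s. fd G (p + t *\<^sub>R v) (s *\<^sub>R v))) (at t)"
    by (simp add: o_def)
  moreover have "(\<lambda>s. fd G (p + t *\<^sub>R v) (s *\<^sub>R v)) = (\<lambda>s. s * fd G (p + t *\<^sub>R v) v)"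
    using lin by (simp add: linear_scale)
  moreover have "(\<lambda>s. s * fd G (p + t *\<^sub>R v) v) = (*) (fd G (p + t *\<^sub>R v) v)"
    by (auto simp: mult.commute)
  ultimately show ?thesis
    by (simp add: has_field_derivative_def)
qed

lemma LD0:
  fixes G :: "'a::euclidean_space \<Rightarrow> real"
  assumes "\<And>x. G differentiable (at x)"
  shows "((\<lambda>t. G (p + t *\<^sub>R v)) has_real_derivative fd G (p + t *\<^sub>R v) v) (at t)"
  using LD assms by blast

lemma CM:
  fixes F :: "'a::euclidean_space \<Rightarrow> real"
  assumes sF: "smooth F"
  shows "fd (\<lambda>z. fd F z u) z w = fd (\<lambda>z. fd F z w) z u"
proof -
  define Fu where "Fu = (\<lambda>z. fd F z u)"
  define Fw where "Fw = (\<lambda>z. fd F z w)"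
  define Fuw where "Fuw = (\<lambda>z. fd Fu z w)"
  define Fwu where "Fwu = (\<lambda>z. fd Fw z u)"
  have sFu: "smooth Fu" and sFw: "smooth Fw" unfolding Fu_def Fw_def using sF by (auto intro: smooth_fd)
  have sFuw: "smooth Fuw" and sFwu: "smooth Fwu" unfolding Fuw_def Fwu_def
    using sFu sFw by (auto intro: smooth_fd)
  have dF: "\<And>x. F differentiable (at x)" using sF smooth_diff_at by blast
  have dFu: "\<And>x. Fu differentiable (at x)" using sFu smooth_diff_at by blast
  have dFw: "\<And>x. Fw differentiable (at x)" using sFw smooth_diff_at by blast
  define \<Delta> where "\<Delta> s = F (z + s *\<^sub>R u + s *\<^sub>R w) - F (z + s *\<^sub>R u) - F (z + s *\<^sub>R w) + F z" for s
  have key1: "\<exists>a b. 0 < a \<and> a < s \<and> 0 < b \<and> b < s \<and> \<Delta> s = s * s * Fuw (z + a *\<^sub>R u + b *\<^sub>R w)"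
    if s: "s > 0" for s
  proof -
    define g where "g a = F ((z + s *\<^sub>R w) + a *\<^sub>R u) - F (z + a *\<^sub>R u)" for a
    have "DERIV g a :> (Fu ((z + s *\<^sub>R w) + a *\<^sub>R u) - Fu (z + a *\<^sub>R u))" for a
      unfolding g_def Fu_def by (intro DERIV_diff LD0 dF)
    from MVT2[OF s this] obtain a where a: "0 < a" "a < s"
      and ga: "g s - g 0 = (s - 0) * (Fu ((z + s *\<^sub>R w) + a *\<^sub>R u) - Fu (z + a *\<^sub>R u))" by blast
    define k where "k b = Fu ((z + a *\<^sub>R u) + b *\<^sub>R w)" for b
    have "DERIV k b :> Fuw ((z + a *\<^sub>R u) + b *\<^sub>R w)" for b
      unfolding k_def Fuw_def by (intro LD0 dFu)
    from MVT2[OF s this] obtain b where b: "0 < b" "b < s"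
      and kb: "k s - k 0 = (s - 0) * Fuw ((z + a *\<^sub>R u) + b *\<^sub>R w)" by blast
    have "\<Delta> s = g s - g 0" unfolding \<Delta>_def g_def by (simp add: algebra_simps)
    also have "\<dots> = s * (k s - k 0)" using ga unfolding k_def by (simp add: algebra_simps)
    also have "\<dots> = s * s * Fuw (z + a *\<^sub>R u + b *\<^sub>R w)" using kb by simp
    finally show ?thesis using a b by blast
  qed
  have key2: "\<exists>a b. 0 < a \<and> a < s \<and> 0 < b \<and> b < s \<and> \<Delta> s = s * s * Fwu (z + a *\<^sub>R u + b *\<^sub>R w)"
    if s: "s > 0" for s
  proof -
    define g where "g b = F ((z + s *\<^sub>R u) + b *\<^sub>R w) - F (z + b *\<^sub>R w)" for b
    have "DERIV g b :> (Fw ((z + s *\<^sub>R u) + b *\<^sub>R w) - Fw (z + b *\<^sub>R w))" for b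
      unfolding g_def Fw_def by (intro DERIV_diff LD0 dF)
    from MVT2[OF s this] obtain b where b: "0 < b" "b < s"
      and gb: "g s - g 0 = (s - 0) * (Fw ((z + s *\<^sub>R u) + b *\<^sub>R w) - Fw (z + b *\<^sub>R w))" by blast
    define k where "k a = Fw ((z + b *\<^sub>R w) + a *\<^sub>R u)" for a
    have "DERIV k a :> Fwu ((z + b *\<^sub>R w) + a *\<^sub>R u)" for a
      unfolding k_def Fwu_def by (intro LD0 dFw)
    from MVT2[OF s this] obtain a where a: "0 < a" "a < s"
      and ka: "k s - k 0 = (s - 0) * Fwu ((z + b *\<^sub>R w) + a *\<^sub>R u)" by blast
    have "\<Delta> s = g s - g 0" unfolding \<Delta>_def g_def by (simp add: algebra_simps)
    also have "\<dots> = s * (k s - k 0)" using gb unfolding k_def by (simp add: algebra_simps)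
    also have "\<dots> = s * s * Fwu (z + a *\<^sub>R u + b *\<^sub>R w)" using ka by (simp add: algebra_simps)
    finally show ?thesis using a b by blast
  qed
  define C where "C = norm u + norm w + 1"
  have Cpos: "C > 0" unfolding C_def by (simp add: add_nonneg_pos)
  have near: "norm (z + a *\<^sub>R u + b *\<^sub>R w - z) \<le> s * C"
    if "0 < a" "a < s" "0 < b" "b < s" for a b s
  proof -
    have "norm (z + a *\<^sub>R u + b *\<^sub>R w - z) = norm (a *\<^sub>R u + b *\<^sub>R w)"
      by (simp add: algebra_simps)
    also have "\<dots> \<le> norm (a *\<^sub>R u) + norm (b *\<^sub>R w)"
      by (rule norm_triangle_ineq)
    also have "\<dots> = a * norm u + b * norm w" using that by simp
    also have "\<dots> \<le> s * norm u + s * norm w"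
      using that by (intro add_mono mult_right_mono) auto
    also have "\<dots> \<le> s * C" unfolding C_def using that by (simp add: algebra_simps)
    finally show ?thesis .
  qed
  show ?thesis
  proof (rule ccontr)
    assume ne: "fd (\<lambda>z. fd F z u) z w \<noteq> fd (\<lambda>z. fd F z w) z u"
    define d where "d = \<bar>Fuw z - Fwu z\<bar>"
    have d: "d > 0" using ne unfolding d_def Fuw_def Fwu_def Fu_def Fw_def by simp
    have c1: "isCont Fuw z" and c2: "isCont Fwu z" using sFuw sFwu smooth_isCont by blast+
    obtain r1 where r1: "r1 > 0" "\<And>p. dist p z < r1 \<Longrightarrow> dist (Fuw p) (Fuw z) < d / 2"
      using c1[unfolded continuous_at_eps_delta] d by (metis half_gt_zero)
    obtain r2 where r2: "r2 > 0" "\<And>p. dist p z < r2 \<Longrightarrow> dist (Fwu p) (Fwu z) < d / 2"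
      using c2[unfolded continuous_at_eps_delta] d by (metis half_gt_zero)
    define s where "s = min r1 r2 / (2 * C)"
    have s: "s > 0" unfolding s_def using r1 r2 Cpos by simp
    have sC: "s * C < r1" "s * C < r2" unfolding s_def using r1 r2 Cpos by (auto simp: field_simps)
    obtain a1 b1 where ab1: "0 < a1" "a1 < s" "0 < b1" "b1 < s"
      and e1: "\<Delta> s = s * s * Fuw (z + a1 *\<^sub>R u + b1 *\<^sub>R w)" using key1[OF s] by blast
    obtain a2 b2 where ab2: "0 < a2" "a2 < s" "0 < b2" "b2 < s"
      and e2: "\<Delta> s = s * s * Fwu (z + a2 *\<^sub>R u + b2 *\<^sub>R w)" using key2[OF s] by blast
    have eq: "Fuw (z + a1 *\<^sub>R u + b1 *\<^sub>R w) = Fwu (z + a2 *\<^sub>R u + b2 *\<^sub>R w)"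
      using e1 e2 s by simp
    have "dist (Fuw (z + a1 *\<^sub>R u + b1 *\<^sub>R w)) (Fuw z) < d / 2"
      using near[OF ab1] sC by (intro r1(2)) (simp add: dist_norm)
    moreover have "dist (Fwu (z + a2 *\<^sub>R u + b2 *\<^sub>R w)) (Fwu z) < d / 2"
      using near[OF ab2] sC by (intro r2(2)) (simp add: dist_norm)
    ultimately show False using eq unfolding d_def dist_real_def by (simp add: abs_if split: if_splits)
  qed
qed

definition dh :: "('a::euclidean_space \<times> real \<Rightarrow> real) \<Rightarrow> ('a \<times> real \<Rightarrow> real)" where
  "dh F = (\<lambda>z. fd F z (0, 1))"

lemma smooth_dh: "smooth F \<Longrightarrow> smooth (dh F)"
  unfolding dh_def by (rule smooth_fd)

lemma smooth_dh_iter: "smooth F \<Longrightarrow> smooth ((dh ^^ i) F)"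
  by (induction i) (auto intro: smooth_dh)

lemma slice_deriv:
  assumes "smooth F"
  shows "((\<lambda>s. F (x, s)) has_real_derivative dh F (x, s)) (at s)"
proof -
  have "((\<lambda>t. F ((x, 0) + t *\<^sub>R (0, 1))) has_real_derivative fd F ((x, 0) + s *\<^sub>R (0, 1)) (0, 1)) (at s)"
    using assms by (intro LD0 smooth_diff_at)
  then show ?thesis by (simp add: dh_def)
qed

lemma deriv_iter:
  assumes "smooth F"
  shows "(deriv ^^ i) (\<lambda>s. F (x, s)) = (\<lambda>s. (dh ^^ i) F (x, s))"
proof (induction i)
  case 0 then show ?case by simp
next
  case (Suc i)
  have "deriv (\<lambda>s. (dh ^^ i) F (x, s)) = (\<lambda>s. dh ((dh ^^ i) F) (x, s))"
    using slice_deriv[OF smooth_dh_iter[OF assms, of i]] DERIV_imp_deriv by blast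
  with Suc show ?case by simp
qed

lemma dh_iter_comm:
  assumes "smooth F"
  shows "(dh ^^ i) (\<lambda>z. fd F z u) = (\<lambda>z. fd ((dh ^^ i) F) z u)"
proof (induction i)
  case 0 then show ?case by simp
next
  case (Suc i)
  define G where "G = (dh ^^ i) F"
  have sG: "smooth G" unfolding G_def using assms by (rule smooth_dh_iter)
  have "(dh ^^ Suc i) (\<lambda>z. fd F z u) = dh (\<lambda>z. fd G z u)" using Suc by (simp add: G_def)
  also have "\<dots> = (\<lambda>z. fd (\<lambda>z. fd G z u) z (0, 1))" by (simp add: dh_def)
  also have "\<dots> = (\<lambda>z. fd (\<lambda>z. fd G z (0, 1)) z u)" using CM[OF sG] by simp
  also have "\<dots> = (\<lambda>z. fd ((dh ^^ Suc i) F) z u)" by (simp add: G_def dh_def)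
  finally show ?case .
qed

lemma zero_slice_fd:
  fixes G :: "'a::euclidean_space \<times> real \<Rightarrow> real"
  assumes "smooth G" "\<And>x. G (x, 0) = 0"
  shows "fd G (x, 0) (u, 0) = 0"
proof -
  have "((\<lambda>t. G ((x, 0) + t *\<^sub>R (u, 0))) has_real_derivative fd G ((x, 0) + 0 *\<^sub>R (u, 0)) (u, 0)) (at 0)"
    using assms by (intro LD0 smooth_diff_at)
  moreover have "(\<lambda>t. G ((x, 0) + t *\<^sub>R (u, 0))) = (\<lambda>t. 0)" using assms(2) by simp
  ultimately have "((\<lambda>t. 0) has_real_derivative fd G (x, 0) (u, 0)) (at 0)" by simp
  then show ?thesis using DERIV_const DERIV_unique by blast
qed

lemma compact_bound:
  fixes f :: "'a::metric_space \<Rightarrow> real"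
  assumes "compact K" "continuous_on K f"
  shows "\<exists>B. \<forall>z\<in>K. \<bar>f z\<bar> \<le> B"
proof -
  have "bounded (f ` K)" using assms compact_continuous_image compact_imp_bounded by blast
  then show ?thesis unfolding bounded_iff by auto
qed

lemma sum_zero_power:
  assumes "n > 0"
  shows "(\<Sum>i<n. c i * (0::real) ^ i) = c 0"
proof -
  obtain m where "n = Suc m" using assms gr0_implies_Suc by blast
  then show ?thesis by (simp add: sum.lessThan_Suc_shift del: sum.lessThan_Suc)
qed

lemma taylor_bound:
  fixes F :: "'a::euclidean_space \<times> real \<Rightarrow> real"
  assumes sF: "smooth F" and S: "compact S" and n: "n > 0"
  shows "\<exists>M. \<forall>x\<in>S. \<forall>h. 0 \<le> h \<and> h \<le> \<delta> \<longrightarrow>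
           \<bar>F (x, h) - (\<Sum>i<n. (dh ^^ i) F (x, 0) / fact i * h ^ i)\<bar> \<le> M * h ^ n"
proof -
  have "compact (S \<times> {0..\<delta>})" using S by (intro compact_Times) auto
  moreover have "continuous_on (S \<times> {0..\<delta>}) ((dh ^^ n) F)"
    using smooth_dh_iter[OF sF] smooth_cont by blast
  ultimately obtain B where B: "\<And>z. z \<in> S \<times> {0..\<delta>} \<Longrightarrow> \<bar>(dh ^^ n) F z\<bar> \<le> B"
    using compact_bound[of "S \<times> {0..\<delta>}" "(dh ^^ n) F"] by auto
  have "\<bar>F (x, h) - (\<Sum>i<n. (dh ^^ i) F (x, 0) / fact i * h ^ i)\<bar> \<le> B / fact n * h ^ n"
    if x: "x \<in> S" and h: "0 \<le> h" "h \<le> \<delta>" for x h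
  proof (cases "h = 0")
    case True
    then show ?thesis using n sum_zero_power[OF n, of "\<lambda>i. (dh ^^ i) F (x, 0) / fact i"]
      by (simp add: power_0_left)
  next
    case False
    then have hp: "0 < h" using h by simp
    have "\<forall>m t. m < n \<and> 0 \<le> t \<and> t \<le> h \<longrightarrow>
        DERIV (\<lambda>s. (dh ^^ m) F (x, s)) t :> (\<lambda>s. (dh ^^ Suc m) F (x, s)) t"
      using slice_deriv[OF smooth_dh_iter[OF sF]] by simp
    from Maclaurin[of h n "\<lambda>m s. (dh ^^ m) F (x, s)" "\<lambda>s. F (x, s)", OF hp n _ this]
    obtain t where t: "0 < t" "t < h"
      and eq: "F (x, h) = (\<Sum>m<n. (dh ^^ m) F (x, 0) / fact m * h ^ m) + (dh ^^ n) F (x, t) / fact n * h ^ n"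
      by auto
    have hB: "\<bar>(dh ^^ n) F (x, t)\<bar> \<le> B" using B[of "(x, t)"] x t h by simp
    have "\<bar>(dh ^^ n) F (x, t) / fact n * h ^ n\<bar> = \<bar>(dh ^^ n) F (x, t)\<bar> / fact n * h ^ n"
      using hp by (simp add: abs_mult)
    also have "\<dots> \<le> B / fact n * h ^ n"
      using hB hp by (intro mult_right_mono divide_right_mono) auto
    finally have "\<bar>(dh ^^ n) F (x, t) / fact n * h ^ n\<bar> \<le> B / fact n * h ^ n" .
    then show ?thesis using eq by simp
  qed
  then show ?thesis by blast
qed

lemma poly_small_zero:
  fixes d :: "nat \<Rightarrow> real"
  assumes "\<delta> > 0" "\<forall>h. 0 < h \<and> h < \<delta> \<longrightarrow> \<bar>\<Sum>i<n. d i * h ^ i\<bar> \<le> M * h ^ n"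
  shows "\<forall>i<n. d i = 0"
  using assms(2)
proof (induction n arbitrary: d M)
  case 0 then show ?case by simp
next
  case (Suc n)
  let ?P = "\<lambda>h. \<Sum>i<Suc n. d i * h ^ i"
  have "((\<lambda>h. \<bar>?P h\<bar>) \<longlongrightarrow> \<bar>?P 0\<bar>) (at_right 0)"
    by (intro tendsto_intros)
  moreover have "?P 0 = d 0" using sum_zero_power[of "Suc n" d] by simp
  ultimately have l1: "((\<lambda>h. \<bar>?P h\<bar>) \<longlongrightarrow> \<bar>d 0\<bar>) (at_right 0)" by simp
  have l2: "((\<lambda>h. M * h ^ Suc n) \<longlongrightarrow> M * 0 ^ Suc n) (at_right (0::real))"
    by (intro tendsto_intros)
  have ev: "eventually (\<lambda>h. \<bar>?P h\<bar> \<le> M * h ^ Suc n) (at_right 0)"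
    unfolding eventually_at_right_field using assms(1) Suc.prems by blast
  have "\<bar>d 0\<bar> \<le> M * 0 ^ Suc n"
    using tendsto_le[OF _ l2 l1 ev] by simp
  then have d0: "d 0 = 0" by simp
  have "\<bar>\<Sum>i<n. d (Suc i) * h ^ i\<bar> \<le> M * h ^ n" if h: "0 < h" "h < \<delta>" for h
  proof -
    have "?P h = h * (\<Sum>i<n. d (Suc i) * h ^ i)"
      using d0 by (simp add: sum.lessThan_Suc_shift sum_distrib_left algebra_simps del: sum.lessThan_Suc)
    moreover have "\<bar>?P h\<bar> \<le> M * h ^ Suc n" using Suc.prems h by blast
    ultimately have "h * \<bar>\<Sum>i<n. d (Suc i) * h ^ i\<bar> \<le> h * (M * h ^ n)"
      using h by (simp only: abs_mult power_Suc) (simp add: ac_simps)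
    then show ?thesis using h by simp
  qed
  then have "\<forall>i<n. d (Suc i) = 0" using Suc.IH[of "\<lambda>i. d (Suc i)" M] by blast
  then show ?case using d0 by (metis less_Suc_eq_0_disj)
qed




lemma onorm_sum_basis:
  fixes g :: "'a::euclidean_space \<Rightarrow> real"
  assumes "linear g"
  shows "onorm g \<le> (\<Sum>b\<in>Basis. \<bar>g b\<bar>)"
proof (rule onorm_le)
  fix v :: 'a
  have "g v = g (\<Sum>b\<in>Basis. (v \<bullet> b) *\<^sub>R b)" by (simp add: euclidean_representation)
  also have "\<dots> = (\<Sum>b\<in>Basis. (v \<bullet> b) * g b)"
    using assms by (simp add: linear_sum linear_scale)
  finally have "\<bar>g v\<bar> \<le> (\<Sum>b\<in>Basis. \<bar>v \<bullet> b\<bar> * \<bar>g b\<bar>)"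
    by (simp add: abs_mult[symmetric] sum_abs)
  also have "\<dots> \<le> (\<Sum>b\<in>Basis. norm v * \<bar>g b\<bar>)"
    by (intro sum_mono mult_right_mono) (auto simp: Basis_le_norm)
  finally show "norm (g v) \<le> (\<Sum>b\<in>Basis. \<bar>g b\<bar>) * norm v"
    by (simp add: sum_distrib_left mult.commute)
qed

lemma smooth_bound:
  fixes f :: "'a::euclidean_space \<Rightarrow> real"
  assumes "smooth f" "compact S"
  shows "\<exists>B. \<forall>z\<in>S. \<bar>f z\<bar> \<le> B"
  using compact_bound[of S f] assms smooth_cont by blast

lemma smooth_lipschitz:
  fixes f :: "'a::euclidean_space \<Rightarrow> real"
  assumes sf: "smooth f" and S: "compact S" "convex S"
  shows "\<exists>L. \<forall>a\<in>S. \<forall>b\<in>S. \<bar>f a - f b\<bar> \<le> L * norm (a - b)"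
proof -
  have "continuous_on S (\<lambda>x. \<Sum>b\<in>Basis. \<bar>fd f x b\<bar>)"
    using smooth_cont[OF smooth_fd[OF sf]] by (intro continuous_intros) auto
  then obtain B where B: "\<And>x. x \<in> S \<Longrightarrow> \<bar>\<Sum>b\<in>Basis. \<bar>fd f x b\<bar>\<bar> \<le> B"
    using compact_bound[of S "\<lambda>x. \<Sum>b\<in>Basis. \<bar>fd f x b\<bar>"] S by auto
  have "\<bar>f a - f b\<bar> \<le> B * norm (a - b)" if "a \<in> S" "b \<in> S" for a b
  proof -
    have "norm (f a - f b) \<le> B * norm (a - b)"
    proof (rule differentiable_bound[OF S(2) _ _ that])
      fix x assume "x \<in> S"
      show "(f has_derivative fd f x) (at x within S)"
        using fd_works[OF smooth_diff_at[OF sf]] has_derivative_at_withinI by blast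
      have "onorm (fd f x) \<le> (\<Sum>b\<in>Basis. \<bar>fd f x b\<bar>)"
        by (rule onorm_sum_basis[OF linear_frechet_derivative[OF smooth_diff_at[OF sf]]])
      then show "onorm (fd f x) \<le> B" using B[OF \<open>x \<in> S\<close>] by simp
    qed
    then show ?thesis by simp
  qed
  then show ?thesis by blast
qed

lemma smooth_const: "smooth (\<lambda>x. c)" by (simp add: smooth_def Ck_const)
lemma smooth_add: "smooth f \<Longrightarrow> smooth g \<Longrightarrow> smooth (\<lambda>x. f x + g x)" by (simp add: smooth_def Ck_add)
lemma smooth_diff: "smooth f \<Longrightarrow> smooth g \<Longrightarrow> smooth (\<lambda>x. f x - g x)" by (simp add: smooth_def Ck_diff)
lemma smooth_mult: "smooth f \<Longrightarrow> smooth g \<Longrightarrow> smooth (\<lambda>x. f x * g x)" by (simp add: smooth_def Ck_mult)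
lemma smooth_minus: "smooth f \<Longrightarrow> smooth (\<lambda>x. - f x)" by (simp add: smooth_def Ck_minus)
lemma smooth_power: "smooth f \<Longrightarrow> smooth (\<lambda>x. f x ^ j)" by (simp add: smooth_def Ck_power)
lemma smooth_sum: "finite A \<Longrightarrow> (\<And>j. j \<in> A \<Longrightarrow> smooth (f j)) \<Longrightarrow> smooth (\<lambda>x. \<Sum>j\<in>A. f j x)"
  by (simp add: smooth_def Ck_sum)
lemma smooth_linear: "linear (P :: 'a::euclidean_space \<Rightarrow> real) \<Longrightarrow> smooth P"
  by (simp add: smooth_def Ck_linear)
lemma smooth_linear_comp: "linear (P :: 'a::euclidean_space \<Rightarrow> 'b::euclidean_space) \<Longrightarrow> smooth f \<Longrightarrow> smooth (\<lambda>x. f (P x))"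
  by (simp add: smooth_def Ck_linear_comp)
lemma smooth_comp2:
  fixes P :: "'a::euclidean_space \<Rightarrow> 'b::euclidean_space" and F :: "'b \<times> real \<Rightarrow> real"
  shows "linear P \<Longrightarrow> smooth F \<Longrightarrow> smooth e \<Longrightarrow> smooth (\<lambda>z. F (P z, e z))"
  by (simp add: smooth_def Ck_comp2)
lemma smooth_inverse: "\<forall>x. N x > (0::real) \<Longrightarrow> smooth N \<Longrightarrow> smooth (\<lambda>x. 1 / N x)"
  by (simp add: smooth_def Ck_inverse)
lemma smooth_fst: "smooth f \<Longrightarrow> smooth (\<lambda>z. f (fst z))"
  by (rule smooth_linear_comp[OF linear_fst])
lemma smooth_snd_power: "smooth (\<lambda>z::'a::euclidean_space \<times> real. snd z ^ j)"
  by (intro smooth_power smooth_linear linear_snd)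
lemma linear_pair0: "linear (\<lambda>x::'a::euclidean_space. (x, 0::real))"
  by (auto simp: linear_iff)

type_synonym 'n ph = "(real^'n) \<times> (real^'n)"

definition EtZ :: "(('n::finite) ph \<Rightarrow> real) \<Rightarrow> (nat \<Rightarrow> 'n ph \<Rightarrow> real) \<Rightarrow> nat \<Rightarrow> 'n ph \<times> real \<Rightarrow> real" where
  "EtZ H Ec m z = Et H Ec m (snd z) (fst z)"

definition KZ :: "(('n::finite) ph \<Rightarrow> real) \<Rightarrow> ('n ph \<Rightarrow> real) \<Rightarrow> (nat \<Rightarrow> 'n ph \<Rightarrow> real \<Rightarrow> real) \<Rightarrow> nat
    \<Rightarrow> ('n ph \<times> real \<Rightarrow> real) \<Rightarrow> 'n ph \<times> real \<Rightarrow> real" where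
  "KZ H N K m E z = Kt H N K m (snd z) (fst z) (E z)"

lemma Et_Suc: "Et H Ec (Suc k) h x = Et H Ec k h x + h ^ Suc k * Ec (Suc k) x"
  by (simp add: Et_def sum.cl_ivl_Suc)

locale prob =
  fixes H N :: "('n::finite) ph \<Rightarrow> real"
    and K :: "nat \<Rightarrow> 'n ph \<Rightarrow> real \<Rightarrow> real"
    and Ec :: "nat \<Rightarrow> 'n ph \<Rightarrow> real"
  assumes sH: "smooth H" and sN: "smooth N" and Npos: "\<forall>x. N x > 0"
    and sK: "\<forall>j\<ge>1. smooth (\<lambda>z::('n ph) \<times> real. K j (fst z) (snd z))"
    and mch: "modified_conformal_hamiltonian H N K Ec"
begin

lemma smooth_EtZ: "(\<And>i. 1 \<le> i \<Longrightarrow> i \<le> m \<Longrightarrow> smooth (Ec i)) \<Longrightarrow> smooth (EtZ H Ec m)"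
  unfolding EtZ_def Et_def
  by (intro smooth_add smooth_fst sH smooth_sum smooth_mult smooth_snd_power) auto

lemma smooth_KZ: "smooth E \<Longrightarrow> smooth (KZ H N K m E)"
proof -
  assume sE: "smooth E"
  have sKj: "smooth (\<lambda>z. K j (fst z) (E z))" if "j \<in> {1..m}" for j
    using smooth_comp2[OF linear_fst, of "\<lambda>z. K j (fst z) (snd z)" E] sK sE that by auto
  have "smooth (\<lambda>z. N (fst z) * (H (fst z) - E z) + (\<Sum>j\<in>{1..m}. snd z ^ j * K j (fst z) (E z)))"
    by (intro smooth_add smooth_mult smooth_diff smooth_fst sN sH sE smooth_sum smooth_snd_power sKj) auto
  then show ?thesis unfolding KZ_def Kt_def by simp
qed

lemma smooth_E1: "(\<And>i. 1 \<le> i \<Longrightarrow> i \<le> k \<Longrightarrow> smooth (Ec i)) \<Longrightarrow>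
   smooth (\<lambda>z. EtZ H Ec k z + snd z ^ m * c)"
  by (intro smooth_add smooth_EtZ smooth_mult smooth_snd_power smooth_const) auto

lemma K_lipschitz_E:
  assumes "j \<ge> 1"
  shows "\<exists>L. \<forall>a b. \<bar>a\<bar> \<le> B \<and> \<bar>b\<bar> \<le> B \<longrightarrow> \<bar>K j x a - K j x b\<bar> \<le> L * \<bar>a - b\<bar>"
proof -
  have "compact ({x} \<times> {-B..B})" "convex ({x} \<times> {-B..B})"
    by (auto intro!: compact_Times convex_Times)
  from smooth_lipschitz[OF sK[rule_format, OF assms] this] obtain L where
    L: "\<forall>a\<in>{x} \<times> {-B..B}. \<forall>b\<in>{x} \<times> {-B..B}.
          \<bar>K j (fst a) (snd a) - K j (fst b) (snd b)\<bar> \<le> L * norm (a - b)" by blast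
  have "\<bar>K j x a - K j x b\<bar> \<le> L * \<bar>a - b\<bar>" if "\<bar>a\<bar> \<le> B" "\<bar>b\<bar> \<le> B" for a b
    using L[rule_format, of "(x, a)" "(x, b)"] that by (auto simp: abs_le_iff)
  then show ?thesis by blast
qed

lemma Ec_formula:
  assumes IH: "\<And>i. 1 \<le> i \<Longrightarrow> i \<le> k \<Longrightarrow> smooth (Ec i)"
  shows "Ec (Suc k) x = (dh ^^ Suc k) (KZ H N K (Suc k) (EtZ H Ec k)) (x, 0) / (fact (Suc k) * N x)"
proof -
  define m where "m = Suc k"
  define c where "c = Ec m x"
  define G0 where "G0 = KZ H N K m (EtZ H Ec k)"
  define E1 where "E1 = (\<lambda>z. EtZ H Ec k z + snd z ^ m * c)"
  define Gc where "Gc = KZ H N K m E1"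
  have sE0: "smooth (EtZ H Ec k)" using IH by (intro smooth_EtZ) auto
  have sE1: "smooth E1" unfolding E1_def using IH by (intro smooth_E1) auto
  have sG0: "smooth G0" unfolding G0_def using sE0 by (rule smooth_KZ)
  have sGc: "smooth Gc" unfolding Gc_def using sE1 by (rule smooth_KZ)
  have fun_eq: "(\<lambda>h. Kt H N K m h x (Et H Ec m h x)) = (\<lambda>h. Gc (x, h))"
    by (simp add: Gc_def KZ_def E1_def EtZ_def m_def c_def Et_Suc)
  have "(deriv ^^ m) (\<lambda>h. Kt H N K m h x (Et H Ec m h x)) 0 = 0"
    using mch unfolding modified_conformal_hamiltonian_def by blast
  then have top: "(dh ^^ m) Gc (x, 0) = 0"
    unfolding fun_eq deriv_iter[OF sGc] by simp
  obtain Ma where Ma: "\<forall>h. 0 \<le> h \<and> h \<le> 1 \<longrightarrow>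
      \<bar>Gc (x, h) - (\<Sum>i<Suc m. (dh ^^ i) Gc (x, 0) / fact i * h ^ i)\<bar> \<le> Ma * h ^ Suc m"
    using taylor_bound[OF sGc, of "{x}" "Suc m" 1] by auto
  obtain Mb where Mb: "\<forall>h. 0 \<le> h \<and> h \<le> 1 \<longrightarrow>
      \<bar>G0 (x, h) - (\<Sum>i<Suc m. (dh ^^ i) G0 (x, 0) / fact i * h ^ i)\<bar> \<le> Mb * h ^ Suc m"
    using taylor_bound[OF sG0, of "{x}" "Suc m" 1] by auto
  obtain B0 where B0: "\<forall>z\<in>{x} \<times> {0..1}. \<bar>EtZ H Ec k z\<bar> \<le> B0"
    using smooth_bound[OF sE0, of "{x} \<times> {0..1}"] compact_Times[OF compact_sing compact_Icc] by blast
  define B where "B = B0 + \<bar>c\<bar>"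
  have "\<forall>j\<in>{1..m}. \<exists>L. \<forall>a b. \<bar>a\<bar> \<le> B \<and> \<bar>b\<bar> \<le> B \<longrightarrow> \<bar>K j x a - K j x b\<bar> \<le> L * \<bar>a - b\<bar>"
    using K_lipschitz_E by auto
  then obtain Lf where Lf: "\<And>j a b. j \<in> {1..m} \<Longrightarrow> \<bar>a\<bar> \<le> B \<Longrightarrow> \<bar>b\<bar> \<le> B \<Longrightarrow>
      \<bar>K j x a - K j x b\<bar> \<le> Lf j * \<bar>a - b\<bar>"
    by metis
  define L where "L = (\<Sum>j\<in>{1..m}. \<bar>Lf j\<bar>)"
  have LfL: "\<bar>Lf j\<bar> \<le> L" if "j \<in> {1..m}" for j
    unfolding L_def using that by (intro member_le_sum) auto
  define M1 where "M1 = real m * L * \<bar>c\<bar>"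
  have diffb: "\<bar>Gc (x, h) - G0 (x, h) + N x * c * h ^ m\<bar> \<le> M1 * h ^ Suc m"
    if h: "0 < h" "h < 1" for h
  proof -
    define e0 where "e0 = EtZ H Ec k (x, h)"
    have e0: "\<bar>e0\<bar> \<le> B0" using B0 h unfolding e0_def by auto
    have hm: "\<bar>h ^ m * c\<bar> \<le> \<bar>c\<bar>"
      using h by (simp add: abs_mult power_le_one mult_left_le_one_le)
    have "Gc (x, h) - G0 (x, h) + N x * c * h ^ m =
        (\<Sum>j\<in>{1..m}. h ^ j * (K j x (e0 + h ^ m * c) - K j x e0))"
      by (simp add: Gc_def G0_def KZ_def Kt_def E1_def e0_def algebra_simps sum_subtractf[symmetric])
    also have "\<bar>\<dots>\<bar> \<le> (\<Sum>j\<in>{1..m}. h * (L * (h ^ m * \<bar>c\<bar>)))"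
    proof (rule order_trans[OF sum_abs], rule sum_mono)
      fix j assume j: "j \<in> {1..m}"
      have a1: "\<bar>e0 + h ^ m * c\<bar> \<le> B"
        using e0 hm abs_triangle_ineq[of e0 "h ^ m * c"] unfolding B_def by linarith
      have a2: "\<bar>e0\<bar> \<le> B" using e0 abs_ge_zero[of c] unfolding B_def by linarith
      have "\<bar>K j x (e0 + h ^ m * c) - K j x e0\<bar> \<le> Lf j * \<bar>e0 + h ^ m * c - e0\<bar>"
        by (rule Lf[OF j a1 a2])
      also have "\<dots> = Lf j * (h ^ m * \<bar>c\<bar>)" using h by (simp add: abs_mult)
      also have "\<dots> \<le> L * (h ^ m * \<bar>c\<bar>)"
        using LfL[OF j] abs_ge_self[of "Lf j"] h by (intro mult_right_mono) auto
      finally have kb: "\<bar>K j x (e0 + h ^ m * c) - K j x e0\<bar> \<le> L * (h ^ m * \<bar>c\<bar>)" .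
      have hj: "h ^ j \<le> h ^ 1" using j h by (intro power_decreasing) auto
      have "\<bar>h ^ j * (K j x (e0 + h ^ m * c) - K j x e0)\<bar> = h ^ j * \<bar>K j x (e0 + h ^ m * c) - K j x e0\<bar>"
        using h by (simp add: abs_mult)
      also have "\<dots> \<le> h * (L * (h ^ m * \<bar>c\<bar>))"
        using kb hj h by (intro mult_mono) auto
      finally show "\<bar>h ^ j * (K j x (e0 + h ^ m * c) - K j x e0)\<bar> \<le> h * (L * (h ^ m * \<bar>c\<bar>))" .
    qed
    also have "\<dots> = M1 * h ^ Suc m" by (simp add: M1_def)
    finally show ?thesis .
  qed
  define d where "d i = (dh ^^ i) Gc (x, 0) / fact i - (dh ^^ i) G0 (x, 0) / fact i
      + (if i = m then N x * c else 0)" for i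
  have "\<forall>h. 0 < h \<and> h < 1 \<longrightarrow> \<bar>\<Sum>i<Suc m. d i * h ^ i\<bar> \<le> (Ma + Mb + M1) * h ^ Suc m"
  proof (intro allI impI)
    fix h :: real assume h: "0 < h \<and> h < 1"
    have "(\<Sum>i<Suc m. d i * h ^ i) =
        (\<Sum>i<Suc m. (dh ^^ i) Gc (x, 0) / fact i * h ^ i) - (\<Sum>i<Suc m. (dh ^^ i) G0 (x, 0) / fact i * h ^ i)
        + N x * c * h ^ m"
      by (simp add: d_def algebra_simps sum.distrib sum_subtractf)
    then have "(\<Sum>i<Suc m. d i * h ^ i) =
        - (Gc (x, h) - (\<Sum>i<Suc m. (dh ^^ i) Gc (x, 0) / fact i * h ^ i))
        + (G0 (x, h) - (\<Sum>i<Suc m. (dh ^^ i) G0 (x, 0) / fact i * h ^ i))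
        + (Gc (x, h) - G0 (x, h) + N x * c * h ^ m)" by simp
    moreover have "\<bar>Gc (x, h) - (\<Sum>i<Suc m. (dh ^^ i) Gc (x, 0) / fact i * h ^ i)\<bar> \<le> Ma * h ^ Suc m"
      using Ma h by auto
    moreover have "\<bar>G0 (x, h) - (\<Sum>i<Suc m. (dh ^^ i) G0 (x, 0) / fact i * h ^ i)\<bar> \<le> Mb * h ^ Suc m"
      using Mb h by auto
    moreover have "\<bar>Gc (x, h) - G0 (x, h) + N x * c * h ^ m\<bar> \<le> M1 * h ^ Suc m"
      using diffb h by auto
    ultimately show "\<bar>\<Sum>i<Suc m. d i * h ^ i\<bar> \<le> (Ma + Mb + M1) * h ^ Suc m"
      by (simp add: algebra_simps)
  qed
  from poly_small_zero[OF _ this] have "d m = 0" by simp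
  then have "N x * c = (dh ^^ m) G0 (x, 0) / fact m" using top by (simp add: d_def)
  then have "c = (dh ^^ m) G0 (x, 0) / (fact m * N x)"
    using Npos[rule_format, of x] by (simp add: field_simps)
  then show ?thesis by (simp add: c_def G0_def m_def)
qed

lemma Ec_smooth_upto: "\<forall>i. 1 \<le> i \<and> i \<le> k \<longrightarrow> smooth (Ec i)"
proof (induction k)
  case 0 then show ?case by simp
next
  case (Suc k)
  define G0 where "G0 = KZ H N K (Suc k) (EtZ H Ec k)"
  have IH: "\<And>i. 1 \<le> i \<Longrightarrow> i \<le> k \<Longrightarrow> smooth (Ec i)" using Suc.IH by blast
  have sG0: "smooth G0" unfolding G0_def using IH by (intro smooth_KZ smooth_EtZ) auto
  have eq: "Ec (Suc k) = (\<lambda>x. (dh ^^ Suc k) G0 (x, 0) * (1 / N x) * (1 / fact (Suc k)))"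
    using Ec_formula[OF IH] unfolding G0_def by (auto simp: field_simps)
  have "smooth (Ec (Suc k))" unfolding eq
    by (intro smooth_mult smooth_const smooth_inverse[OF Npos sN]
        smooth_linear_comp[OF linear_pair0, of "(dh ^^ Suc k) G0"] smooth_dh_iter sG0)
  then show ?case using IH by (auto simp: le_Suc_eq)
qed

lemma Ec_smooth: "1 \<le> i \<Longrightarrow> smooth (Ec i)"
  using Ec_smooth_upto[of i] by auto

lemma sEtZ: "smooth (EtZ H Ec m)"
  by (intro smooth_EtZ Ec_smooth)

definition RZ where "RZ m = KZ H N K m (EtZ H Ec m)"

lemma sRZ: "smooth (RZ m)"
  unfolding RZ_def by (intro smooth_KZ sEtZ)

lemma RZ_dh_zero: "i \<le> m \<Longrightarrow> (dh ^^ i) (RZ m) (x, 0) = 0"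
proof -
  assume "i \<le> m"
  then have "(deriv ^^ i) (\<lambda>h. Kt H N K m h x (Et H Ec m h x)) 0 = 0"
    using mch unfolding modified_conformal_hamiltonian_def by blast
  moreover have "(\<lambda>h. Kt H N K m h x (Et H Ec m h x)) = (\<lambda>h. RZ m (x, h))"
    by (simp add: RZ_def KZ_def EtZ_def)
  ultimately show ?thesis using deriv_iter[OF sRZ] by simp
qed

lemma RZ_grad_bound:
  assumes "compact S"
  shows "\<exists>A. \<forall>w\<in>S. \<forall>h. 0 \<le> h \<and> h \<le> 1 \<longrightarrow> \<bar>fd (RZ m) (w, h) (u, 0)\<bar> \<le> A * h ^ Suc m"
proof -
  define G where "G = (\<lambda>z. fd (RZ m) z (u, 0))"
  have sG: "smooth G" unfolding G_def by (intro smooth_fd sRZ)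
  have z: "(dh ^^ i) G (x, 0) = 0" if "i < Suc m" for i x
  proof -
    have "(dh ^^ i) G = (\<lambda>z. fd ((dh ^^ i) (RZ m)) z (u, 0))"
      unfolding G_def by (rule dh_iter_comm[OF sRZ])
    moreover have "fd ((dh ^^ i) (RZ m)) (x, 0) (u, 0) = 0"
      using that by (intro zero_slice_fd smooth_dh_iter sRZ RZ_dh_zero) auto
    ultimately show ?thesis by simp
  qed
  obtain A where A: "\<forall>x\<in>S. \<forall>h. 0 \<le> h \<and> h \<le> 1 \<longrightarrow>
      \<bar>G (x, h) - (\<Sum>i<Suc m. (dh ^^ i) G (x, 0) / fact i * h ^ i)\<bar> \<le> A * h ^ Suc m"
    using taylor_bound[OF sG assms, of "Suc m" 1] by auto
  then show ?thesis using z unfolding G_def by auto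
qed

end




lemma mvt_vec:
  fixes y :: "real \<Rightarrow> 'b::real_normed_vector"
  assumes ab: "a \<le> b"
    and d: "\<And>s. s \<in> {a..b} \<Longrightarrow> (y has_vector_derivative y' s) (at s within {a..b})"
    and B: "\<And>s. s \<in> {a..b} \<Longrightarrow> norm (y' s) \<le> B"
  shows "norm (y b - y a) \<le> B * (b - a)"
proof -
  have "norm (y b - y a) \<le> B * norm (b - a)"
  proof (rule differentiable_bound[of "{a..b}" y "\<lambda>s h. h *\<^sub>R y' s"])
    show "convex {a..b}" by simp
    show "\<And>x. x \<in> {a..b} \<Longrightarrow> (y has_derivative (\<lambda>h. h *\<^sub>R y' x)) (at x within {a..b})"
      using d by (simp add: has_vector_derivative_def)
    show "onorm (\<lambda>h. h *\<^sub>R y' x) \<le> B" if "x \<in> {a..b}" for x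
    proof (rule onorm_le)
      fix h :: real
      have "norm (h *\<^sub>R y' x) = \<bar>h\<bar> * norm (y' x)" by simp
      also have "\<dots> \<le> \<bar>h\<bar> * B" using B[OF that] by (intro mult_left_mono) auto
      finally show "norm (h *\<^sub>R y' x) \<le> B * norm h" by (simp add: mult.commute)
    qed
    show "b \<in> {a..b}" "a \<in> {a..b}" using ab by auto
  qed
  then show ?thesis using ab by simp
qed

lemma solves_on_cont:
  assumes "solves_on X y {t..t+h}"
  shows "continuous_on {t..t+h} y"
  using assms unfolding solves_on_def
  by (metis continuous_on_eq_continuous_within has_vector_derivative_continuous)

lemma cont_induct:
  fixes \<phi> :: "real \<Rightarrow> real"
  assumes c: "continuous_on {t..T} \<phi>" and t: "\<phi> t < \<rho>" and rr: "\<rho>' < \<rho>"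
    and step: "\<And>s. s \<in> {t..T} \<Longrightarrow> (\<forall>\<sigma>\<in>{t..s}. \<phi> \<sigma> < \<rho>) \<Longrightarrow> \<phi> s \<le> \<rho>'"
  shows "\<forall>s\<in>{t..T}. \<phi> s < \<rho>"
proof (rule ccontr)
  assume nt: "\<not> ?thesis"
  define A where "A = {s\<in>{t..T}. \<rho> \<le> \<phi> s}"
  have Ane: "A \<noteq> {}" using nt unfolding A_def by auto
  have "closed A" unfolding A_def
    using continuous_closed_preimage[OF c closed_atLeastAtMost, of "{\<rho>..}"] 
    by (simp add: vimage_def Int_def conj_commute)
  moreover have "bounded A" unfolding A_def by (rule bounded_subset[of "{t..T}"]) auto
  ultimately have cA: "compact A" by (simp add: compact_eq_bounded_closed)
  obtain s1 where s1: "s1 \<in> A" "\<And>s. s \<in> A \<Longrightarrow> s1 \<le> s"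
    using compact_attains_inf[OF cA Ane] by blast
  have s1t: "s1 \<in> {t..T}" "\<rho> \<le> \<phi> s1" using s1 unfolding A_def by auto
  have below: "\<phi> \<sigma> < \<rho>" if "\<sigma> \<in> {t..<s1}" for \<sigma>
  proof (rule ccontr)
    assume "\<not> \<phi> \<sigma> < \<rho>"
    then have "\<sigma> \<in> A" using that s1t unfolding A_def by auto
    then show False using s1(2) that by fastforce
  qed
  have tlt: "t < s1" using s1t t by (cases "t = s1") auto
  have le: "\<phi> \<sigma> \<le> \<rho>'" if "\<sigma> \<in> {t..<s1}" for \<sigma>
    using that s1t by (intro step) (auto intro!: below)
  obtain d where d: "d > 0" "\<And>x. x \<in> {t..T} \<Longrightarrow> dist x s1 < d \<Longrightarrow> dist (\<phi> x) (\<phi> s1) < \<rho> - \<rho>'"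
    using c[unfolded continuous_on_iff] s1t rr by (metis diff_gt_0_iff_gt)
  define \<sigma> where "\<sigma> = max t (s1 - d / 2)"
  have \<sigma>: "\<sigma> \<in> {t..<s1}" "\<sigma> \<in> {t..T}" "dist \<sigma> s1 < d"
    using tlt d s1t unfolding \<sigma>_def by (auto simp: dist_real_def)
  have "\<phi> s1 < \<phi> \<sigma> + (\<rho> - \<rho>')" using d(2)[OF \<sigma>(2,3)] by (simp add: dist_real_def)
  then show False using le[OF \<sigma>(1)] s1t by linarith
qed

lemma stay_in_ball:
  fixes f :: "'a::real_normed_vector \<Rightarrow> 'a"
  assumes sol: "solves_on f y {t..t+h}" and h: "0 \<le> h"
    and fb: "\<And>w. w \<in> cball x0 r \<Longrightarrow> norm (f w) \<le> M"
    and start: "dist x0 (y t) + h * M < r" and M0: "0 \<le> M"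
  shows "\<forall>s\<in>{t..t+h}. dist x0 (y s) < r"
proof -
  have cy: "continuous_on {t..t+h} y" using sol by (rule solves_on_cont)
  have ht: "dist x0 (y t) < r" using start h M0 by (smt (verit) mult_nonneg_nonneg)
  show ?thesis
  proof (rule cont_induct[where \<rho>' = "dist x0 (y t) + h * M"])
    show "continuous_on {t..t+h} (\<lambda>s. dist x0 (y s))" using cy by (intro continuous_intros)
    show "dist x0 (y t) < r" by (rule ht)
    show "dist x0 (y t) + h * M < r" by (rule start)
    fix s assume s: "s \<in> {t..t+h}" and all: "\<forall>\<sigma>\<in>{t..s}. dist x0 (y \<sigma>) < r"
    have "norm (y s - y t) \<le> M * (s - t)"
    proof (rule mvt_vec[where y' = "\<lambda>\<sigma>. f (y \<sigma>)"])
      show "t \<le> s" using s by simp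
      fix \<sigma> assume \<sigma>: "\<sigma> \<in> {t..s}"
      then have "\<sigma> \<in> {t..t+h}" using s by auto
      then have "(y has_vector_derivative f (y \<sigma>)) (at \<sigma> within {t..t+h})"
        using sol unfolding solves_on_def by blast
      then show "(y has_vector_derivative f (y \<sigma>)) (at \<sigma> within {t..s})"
        by (rule has_vector_derivative_within_subset) (use s in auto)
      show "norm (f (y \<sigma>)) \<le> M" using all \<sigma> by (intro fb) (simp add: less_imp_le)
    qed
    also have "\<dots> \<le> M * h" using s M0 by (intro mult_left_mono) auto
    finally have "norm (y s - y t) \<le> h * M" by (simp add: mult.commute)
    moreover have "dist x0 (y s) \<le> dist x0 (y t) + norm (y s - y t)"
      by (metis dist_norm dist_triangle add.commute dist_commute)
    ultimately show "dist x0 (y s) \<le> dist x0 (y t) + h * M" by linarith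
  qed
qed

lemma compare:
  fixes f g :: "'a::real_normed_vector \<Rightarrow> 'a"
  assumes sy: "solves_on f y {t..t+h}" and sz: "solves_on g z {t..t+h}" and h: "0 \<le> h"
    and yz: "y t = z t"
    and inK: "\<And>s. s \<in> {t..t+h} \<Longrightarrow> y s \<in> K \<and> z s \<in> K"
    and lip: "\<And>a b. a \<in> K \<Longrightarrow> b \<in> K \<Longrightarrow> norm (g a - g b) \<le> L * norm (a - b)"
    and L: "0 \<le> L" and hL: "h * L \<le> 1/2"
    and eps: "\<And>s. s \<in> {t..t+h} \<Longrightarrow> norm (f (y s) - g (y s)) \<le> \<epsilon>"
  shows "norm (y (t+h) - z (t+h)) \<le> 2 * h * \<epsilon>"
proof -
  have cy: "continuous_on {t..t+h} y" using sy by (rule solves_on_cont)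
  have cz: "continuous_on {t..t+h} z" using sz by (rule solves_on_cont)
  have "continuous_on {t..t+h} (\<lambda>s. norm (y s - z s))" using cy cz by (intro continuous_intros)
  then obtain s0 where s0: "s0 \<in> {t..t+h}" and smax: "\<And>s. s \<in> {t..t+h} \<Longrightarrow> norm (y s - z s) \<le> norm (y s0 - z s0)"
    using continuous_attains_sup[of "{t..t+h}" "\<lambda>s. norm (y s - z s)"] h by auto
  define D where "D = norm (y s0 - z s0)"
  have e0: "0 \<le> \<epsilon>" using eps[of t] h by (smt (verit) atLeastAtMost_iff norm_ge_zero)
  have D0: "0 \<le> D" unfolding D_def by simp
  have "norm ((y s0 - z s0) - (y t - z t)) \<le> (\<epsilon> + L * D) * (s0 - t)"
  proof (rule mvt_vec[where y' = "\<lambda>s. f (y s) - g (z s)"])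
    show "t \<le> s0" using s0 by simp
    fix s assume s: "s \<in> {t..s0}"
    then have s': "s \<in> {t..t+h}" using s0 by auto
    have "(y has_vector_derivative f (y s)) (at s within {t..t+h})"
      "(z has_vector_derivative g (z s)) (at s within {t..t+h})"
      using sy sz s' unfolding solves_on_def by blast+
    then have "((\<lambda>s. y s - z s) has_vector_derivative f (y s) - g (z s)) (at s within {t..t+h})"
      by (rule has_vector_derivative_diff)
    then show "((\<lambda>s. y s - z s) has_vector_derivative f (y s) - g (z s)) (at s within {t..s0})"
      by (rule has_vector_derivative_within_subset) (use s0 in auto)
    have "norm (f (y s) - g (z s)) \<le> norm (f (y s) - g (y s)) + norm (g (y s) - g (z s))"
      by (rule norm_diff_triangle_le[where y = "g (y s)"]) simp_all
    also have "\<dots> \<le> \<epsilon> + L * norm (y s - z s)"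
      using eps[OF s'] lip[of "y s" "z s"] inK[OF s'] by (intro add_mono) auto
    also have "\<dots> \<le> \<epsilon> + L * D" using smax[OF s'] L unfolding D_def by (intro add_left_mono mult_left_mono) auto
    finally show "norm (f (y s) - g (z s)) \<le> \<epsilon> + L * D" .
  qed
  then have "D \<le> (\<epsilon> + L * D) * (s0 - t)" using yz unfolding D_def by simp
  also have "\<dots> \<le> (\<epsilon> + L * D) * h" using s0 e0 L D0 by (intro mult_left_mono) auto
  also have "\<dots> = h * \<epsilon> + (h * L) * D" by (simp add: algebra_simps)
  also have "\<dots> \<le> h * \<epsilon> + D / 2"
  proof -
    have "(h * L) * D \<le> (1/2) * D" using hL D0 by (rule mult_right_mono)
    then show ?thesis by simp
  qed
  finally have "D \<le> 2 * h * \<epsilon>" by simp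
  moreover have "norm (y (t+h) - z (t+h)) \<le> D" using smax[of "t+h"] h unfolding D_def by simp
  ultimately show ?thesis by simp
qed

lemma picard:
  fixes g :: "'a::euclidean_space \<Rightarrow> 'a"
  assumes lip: "\<And>a b. a \<in> cball x0 r \<Longrightarrow> b \<in> cball x0 r \<Longrightarrow> norm (g a - g b) \<le> L * norm (a - b)"
    and bnd: "\<And>a. a \<in> cball x0 r \<Longrightarrow> norm (g a) \<le> M"
    and x: "dist x0 x + h * M \<le> r" and h: "0 < h" and L: "0 \<le> L" and hL: "h * L \<le> 1/2"
    and M: "0 \<le> M"
  shows "\<exists>y. solves_on g y {t..t+h} \<and> y t = x \<and> (\<forall>s\<in>{t..t+h}. y s \<in> cball x0 r)"
proof -
  have "L-lipschitz_on (cball x0 r) g"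
    by (rule lipschitz_onI) (use lip L in \<open>auto simp: dist_norm\<close>)
  then have cg: "continuous_on (cball x0 r) g" by (rule lipschitz_on_continuous_on)
  define c where "c s = max t (min (t+h) s)" for s
  have cc: "continuous_on UNIV c" unfolding c_def by (intro continuous_intros)
  have cin: "c s \<in> {t..t+h}" for s unfolding c_def using h by auto
  have cid: "s \<in> {t..t+h} \<Longrightarrow> c s = s" for s unfolding c_def by auto
  define S where "S = PiC UNIV (\<lambda>_::real. cball x0 r)"
  have inS: "\<phi> \<in> S \<longleftrightarrow> (\<forall>s. apply_bcontfun \<phi> s \<in> cball x0 r)" for \<phi> :: "real \<Rightarrow>\<^sub>C 'a"
    unfolding S_def mem_PiC_iff by auto
  have gcont: "continuous_on A (\<lambda>\<tau>. g (apply_bcontfun \<phi> \<tau>))" if "\<phi> \<in> S" for \<phi> A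
  proof -
    have "range (apply_bcontfun \<phi>) \<subseteq> cball x0 r" using that inS by auto
    then have "continuous_on UNIV (\<lambda>\<tau>. g (apply_bcontfun \<phi> \<tau>))"
      using continuous_on_compose2[OF cg continuous_on_apply_bcontfun[of UNIV \<phi>]] by auto
    then show ?thesis by (rule continuous_on_subset) simp
  qed
  have gint: "(\<lambda>\<tau>. g (apply_bcontfun \<phi> \<tau>)) integrable_on {a..b}" if "\<phi> \<in> S" for \<phi> a b
    using gcont[OF that] by (rule integrable_continuous_real)
  define Tf where "Tf \<phi> s = x + integral {t..c s} (\<lambda>\<tau>. g (apply_bcontfun \<phi> \<tau>))" for \<phi> s
  have ibound: "norm (integral {t..u} (\<lambda>\<tau>. g (apply_bcontfun \<phi> \<tau>))) \<le> M * (u - t)"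
    if "\<phi> \<in> S" "u \<in> {t..t+h}" for \<phi> u
    using that by (intro integral_bound gcont) (auto simp: inS intro!: bnd)
  have Tf_bc: "Tf \<phi> \<in> bcontfun" if "\<phi> \<in> S" for \<phi>
  proof (rule bcontfun_normI)
    have "continuous_on {t..t+h} (\<lambda>u. integral {t..u} (\<lambda>\<tau>. g (apply_bcontfun \<phi> \<tau>)))"
      by (rule indefinite_integral_continuous_1[OF gint[OF that]])
    moreover have "range c \<subseteq> {t..t+h}" using cin by auto
    ultimately have "continuous_on UNIV (\<lambda>s. integral {t..c s} (\<lambda>\<tau>. g (apply_bcontfun \<phi> \<tau>)))"
      using continuous_on_compose2[OF _ cc, of "{t..t+h}" "\<lambda>u. integral {t..u} (\<lambda>\<tau>. g (apply_bcontfun \<phi> \<tau>))"] cin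
      by auto
    then show "continuous_on UNIV (Tf \<phi>)" unfolding Tf_def by (intro continuous_intros)
    fix s
    have "norm (Tf \<phi> s) \<le> norm x + norm (integral {t..c s} (\<lambda>\<tau>. g (apply_bcontfun \<phi> \<tau>)))"
      unfolding Tf_def by (rule norm_triangle_ineq)
    also have "\<dots> \<le> norm x + M * (c s - t)" using ibound[OF that cin[of s]] by simp
    also have "\<dots> \<le> norm x + M * h" using cin[of s] M by (intro add_left_mono mult_left_mono) auto
    finally show "norm (Tf \<phi> s) \<le> norm x + M * h" .
  qed
  define T where "T \<phi> = Bcontfun (Tf \<phi>)" for \<phi>
  have Tapp: "apply_bcontfun (T \<phi>) = Tf \<phi>" if "\<phi> \<in> S" for \<phi>
    unfolding T_def using Tf_bc[OF that] by (simp add: Bcontfun_inverse)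
  have TS: "T ` S \<subseteq> S"
  proof safe
    fix \<phi> assume \<phi>: "\<phi> \<in> S"
    have "Tf \<phi> s \<in> cball x0 r" for s
    proof -
      have "dist x0 (Tf \<phi> s) \<le> dist x0 x + norm (integral {t..c s} (\<lambda>\<tau>. g (apply_bcontfun \<phi> \<tau>)))"
      proof -
        have "dist x0 (Tf \<phi> s) \<le> dist x0 x + dist x (Tf \<phi> s)" by (rule dist_triangle)
        then show ?thesis unfolding Tf_def by (simp add: dist_norm)
      qed
      also have "\<dots> \<le> dist x0 x + M * (c s - t)" using ibound[OF \<phi> cin[of s]] by simp
      also have "\<dots> \<le> dist x0 x + h * M" using cin[of s] M by (simp add: mult.commute mult_left_mono)
      finally show ?thesis using x by simp
    qed
    then show "T \<phi> \<in> S" unfolding inS Tapp[OF \<phi>] by blast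
  qed
  have contr: "dist (T \<phi>) (T \<psi>) \<le> (1/2) * dist \<phi> \<psi>" if \<phi>: "\<phi> \<in> S" and \<psi>: "\<psi> \<in> S" for \<phi> \<psi>
  proof (rule dist_bound)
    fix s
    have "dist (apply_bcontfun (T \<phi>) s) (apply_bcontfun (T \<psi>) s) =
        norm (integral {t..c s} (\<lambda>\<tau>. g (apply_bcontfun \<phi> \<tau>) - g (apply_bcontfun \<psi> \<tau>)))"
      unfolding Tapp[OF \<phi>] Tapp[OF \<psi>] Tf_def dist_norm
      by (simp add: integral_diff[OF gint[OF \<phi>] gint[OF \<psi>]])
    also have "\<dots> \<le> (L * dist \<phi> \<psi>) * (c s - t)"
    proof (rule integral_bound)
      show "t \<le> c s" using cin[of s] by simp
      show "continuous_on {t..c s} (\<lambda>\<tau>. g (apply_bcontfun \<phi> \<tau>) - g (apply_bcontfun \<psi> \<tau>))"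
        by (intro continuous_intros gcont \<phi> \<psi>)
      fix \<tau>
      have "norm (g (apply_bcontfun \<phi> \<tau>) - g (apply_bcontfun \<psi> \<tau>)) \<le> L * norm (apply_bcontfun \<phi> \<tau> - apply_bcontfun \<psi> \<tau>)"
        using \<phi> \<psi> by (intro lip) (auto simp: inS)
      also have "\<dots> \<le> L * dist \<phi> \<psi>" using dist_bounded[of \<phi> \<tau> \<psi>] L
        by (intro mult_left_mono) (auto simp: dist_norm)
      finally show "norm (g (apply_bcontfun \<phi> \<tau>) - g (apply_bcontfun \<psi> \<tau>)) \<le> L * dist \<phi> \<psi>" .
    qed
    also have "\<dots> \<le> (L * dist \<phi> \<psi>) * h" using cin[of s] L by (intro mult_left_mono) auto
    also have "\<dots> = (h * L) * dist \<phi> \<psi>" by simp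
    also have "\<dots> \<le> (1/2) * dist \<phi> \<psi>" using hL by (intro mult_right_mono) auto
    finally show "dist (apply_bcontfun (T \<phi>) s) (apply_bcontfun (T \<psi>) s) \<le> 1 / 2 * dist \<phi> \<psi>" .
  qed
  have "closed S" unfolding S_def by (intro closed_PiC) auto
  then have cS: "complete S" by (simp add: complete_eq_closed)
  have neS: "S \<noteq> {}"
  proof -
    have "(\<lambda>_::real. x0) \<in> bcontfun" by (rule const_bcontfun)
    moreover have "0 \<le> r" using x h M
      by (metis add_nonneg_nonneg order_trans zero_le_dist mult_nonneg_nonneg less_imp_le)
    ultimately have "Bcontfun (\<lambda>_::real. x0) \<in> S" unfolding inS by (simp add: Bcontfun_inverse)
    then show ?thesis by blast
  qed
  have "\<exists>!y\<in>S. T y = y"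
  proof (rule Banach_fix[OF cS neS _ _ TS])
    show "\<And>x y. x \<in> S \<Longrightarrow> y \<in> S \<Longrightarrow> dist (T x) (T y) \<le> 1/2 * dist x y" by (rule contr)
  qed auto
  then obtain y where y: "y \<in> S" "T y = y" by blast
  define Y where "Y = apply_bcontfun y"
  have Yeq: "Y s = x + integral {t..s} (\<lambda>\<tau>. g (Y \<tau>))" if "s \<in> {t..t+h}" for s
  proof -
    have "apply_bcontfun y = Tf y" using Tapp[OF y(1)] y(2) by simp
    then have "apply_bcontfun y s = Tf y s" by (rule fun_cong)
    then show ?thesis unfolding Y_def Tf_def cid[OF that] .
  qed
  have "solves_on g Y {t..t+h}"
    unfolding solves_on_def
  proof
    fix s assume s: "s \<in> {t..t+h}"
    have "((\<lambda>u. integral {t..u} (\<lambda>\<tau>. g (Y \<tau>))) has_vector_derivative g (Y s)) (at s within {t..t+h})"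
      using gcont[OF y(1)] s unfolding Y_def by (intro integral_has_vector_derivative) auto
    then have "((\<lambda>u. x + integral {t..u} (\<lambda>\<tau>. g (Y \<tau>))) has_vector_derivative g (Y s)) (at s within {t..t+h})"
      by (intro derivative_eq_intros) auto
    then show "(Y has_vector_derivative g (Y s)) (at s within {t..t+h})"
      by (rule has_vector_derivative_transform[OF s Yeq, rotated])
  qed
  moreover have "Y t = x" using Yeq[of t] h by simp
  moreover have "\<forall>s\<in>{t..t+h}. Y s \<in> cball x0 r" using y(1) unfolding inS Y_def by blast
  ultimately show ?thesis by blast
qed




lemma fd_affine:
  fixes F :: "'b::euclidean_space \<Rightarrow> real" and Lm :: "'a::euclidean_space \<Rightarrow> 'b"
  assumes dF: "\<And>z. F differentiable (at z)" and Lm: "linear Lm"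
  shows "((\<lambda>w. F (c + Lm w)) has_derivative (\<lambda>u. fd F (c + Lm w) (Lm u))) (at w)"
proof -
  have "((\<lambda>w. c + Lm w) has_derivative Lm) (at w)"
    using Lm by (auto intro!: derivative_eq_intros intro: linear_imp_has_derivative)
  from diff_chain_at[OF this fd_works[OF dF]] show ?thesis by (simp add: o_def)
qed

lemma fd_affine_eq:
  fixes F :: "'b::euclidean_space \<Rightarrow> real" and Lm :: "'a::euclidean_space \<Rightarrow> 'b"
  assumes "\<And>z. F differentiable (at z)" "linear Lm"
  shows "fd (\<lambda>w. F (c + Lm w)) w u = fd F (c + Lm w) (Lm u)"
  using fd_eq[OF fd_affine[OF assms]] by simp

lemma fd_affine_diff:
  fixes F :: "'b::euclidean_space \<Rightarrow> real" and Lm :: "'a::euclidean_space \<Rightarrow> 'b"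
  assumes "\<And>z. F differentiable (at z)" "linear Lm"
  shows "(\<lambda>w. F (c + Lm w)) differentiable (at w)"
  using fd_affine[OF assms] differentiable_def by blast

lemma fd_dir_deriv:
  fixes F :: "'a::euclidean_space \<Rightarrow> real"
  assumes "\<And>z. F differentiable (at z)"
    and "((\<lambda>t. F (p + t *\<^sub>R v)) has_real_derivative D) (at 0)"
  shows "fd F p v = D"
  using LD0[OF assms(1), where p=p and t=0 and v=v] assms(2) DERIV_unique by fastforce

lemma fd_pair_basis:
  fixes F :: "(real^'n) \<times> (real^'n) \<Rightarrow> real"
  assumes "F differentiable (at w)"
  shows "fd F w (a, b) = dq F w \<bullet> a + dp F w \<bullet> b"
proof -
  have lin: "linear (fd F w)" using assms by (rule linear_frechet_derivative)
  have l1: "linear (\<lambda>x. fd F w (x, 0))"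
    using linear_compose[OF _ lin, of "\<lambda>x::real^'n. (x, 0::real^'n)"] by (simp add: o_def linear_iff)
  have l2: "linear (\<lambda>x. fd F w (0, x))"
    using linear_compose[OF _ lin, of "\<lambda>x::real^'n. (0::real^'n, x)"] by (simp add: o_def linear_iff)
  have sc1: "fd F w (c *\<^sub>R x, 0) = c * fd F w (x, 0)" for c x using linear_scale[OF l1, of c x] by simp
  have sc2: "fd F w (0, c *\<^sub>R x) = c * fd F w (0, x)" for c x using linear_scale[OF l2, of c x] by simp
  have su1: "fd F w (sum g S, 0) = (\<Sum>i\<in>S. fd F w (g i, 0))" for g and S :: "'n set"
    using linear_sum[OF l1, of g S] by (simp add: o_def)
  have su2: "fd F w (0, sum g S) = (\<Sum>i\<in>S. fd F w (0, g i))" for g and S :: "'n set"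
    using linear_sum[OF l2, of g S] by (simp add: o_def)
  have "fd F w (a, b) = fd F w ((a, 0) + (0, b))" by simp
  also have "\<dots> = fd F w (a, 0) + fd F w (0, b)" using lin by (rule linear_add)
  finally have ab: "fd F w (a, b) = fd F w (a, 0) + fd F w (0, b)" .
  have "fd F w (a, 0) = (\<lambda>x. fd F w (x, 0)) (\<Sum>i\<in>UNIV. a $ i *\<^sub>R axis i 1)"
    using basis_expansion[of a] by (simp add: scalar_mult_eq_scaleR)
  also have "\<dots> = (\<Sum>i\<in>UNIV. a $ i * fd F w (axis i 1, 0))"
    by (simp add: su1 sc1)
  finally have ha: "fd F w (a, 0) = (\<Sum>i\<in>UNIV. a $ i * fd F w (axis i 1, 0))" .
  have "fd F w (0, b) = (\<lambda>x. fd F w (0, x)) (\<Sum>i\<in>UNIV. b $ i *\<^sub>R axis i 1)"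
    using basis_expansion[of b] by (simp add: scalar_mult_eq_scaleR)
  also have "\<dots> = (\<Sum>i\<in>UNIV. b $ i * fd F w (0, axis i 1))"
    by (simp add: su2 sc2)
  finally have hb: "fd F w (0, b) = (\<Sum>i\<in>UNIV. b $ i * fd F w (0, axis i 1))" .
  show ?thesis unfolding ab ha hb by (simp add: dq_def dp_def inner_vec_def mult.commute)
qed

lemma norm_pair_le:
  fixes a :: "'a::real_normed_vector" and b :: "'b::real_normed_vector"
  shows "norm (a, b) \<le> norm a + norm b"
proof -
  have "sqrt ((norm a)\<^sup>2 + (norm b)\<^sup>2) \<le> sqrt ((norm a + norm b)\<^sup>2)"
    by (intro real_sqrt_le_mono) (simp add: power2_sum)
  then show ?thesis by (simp add: norm_Pair)
qed

lemma smooth_family_lip: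
  fixes \<phi> :: "'i \<Rightarrow> 'a::euclidean_space \<Rightarrow> real"
  assumes "\<And>U. smooth (\<phi> U)" "compact Q" "convex Q"
  shows "\<exists>Lf. \<forall>U. \<forall>a\<in>Q. \<forall>b\<in>Q. \<bar>\<phi> U a - \<phi> U b\<bar> \<le> Lf U * norm (a - b)"
proof -
  have "\<forall>U. \<exists>L. \<forall>a\<in>Q. \<forall>b\<in>Q. \<bar>\<phi> U a - \<phi> U b\<bar> \<le> L * norm (a - b)"
    using smooth_lipschitz assms by blast
  then show ?thesis by (rule choice)
qed

lemma smooth_family_bound:
  fixes \<phi> :: "'i \<Rightarrow> 'a::euclidean_space \<Rightarrow> real"
  assumes "\<And>U. smooth (\<phi> U)" "compact Q"
  shows "\<exists>Bf. \<forall>U. \<forall>z\<in>Q. \<bar>\<phi> U z\<bar> \<le> Bf U"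
proof -
  have "\<forall>U. \<exists>B. \<forall>z\<in>Q. \<bar>\<phi> U z\<bar> \<le> B"
    using smooth_bound assms by blast
  then show ?thesis by (rule choice)
qed

lemma norm_vpair_le:
  fixes p q :: "real^'n"
  shows "norm (p, q) \<le> (\<Sum>i\<in>UNIV. \<bar>p $ i\<bar>) + (\<Sum>i\<in>UNIV. \<bar>q $ i\<bar>)"
  using norm_pair_le[of p q] norm_le_l1_cart[of p] norm_le_l1_cart[of q] by linarith

context prob
begin

definition KB :: "nat \<Rightarrow> ('n ph \<times> real) \<times> real \<Rightarrow> real" where
  "KB l y = Kt H N K l (snd y) (fst (fst y)) (snd (fst y))"

lemma Kt_KB: "Kt H N K l h w E = KB l ((w, E), h)"
  by (simp add: KB_def)

lemma sKB: "smooth (KB l)"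
proof -
  have sKj: "smooth (\<lambda>y::('n ph \<times> real) \<times> real. K j (fst (fst y)) (snd (fst y)))" if "j \<in> {1..l}" for j
    using smooth_fst[of "\<lambda>z. K j (fst z) (snd z)"] sK that by auto
  have "smooth (\<lambda>y::('n ph \<times> real) \<times> real. N (fst (fst y)) * (H (fst (fst y)) - snd (fst y))
        + (\<Sum>j\<in>{1..l}. snd y ^ j * K j (fst (fst y)) (snd (fst y))))"
    by (intro smooth_add smooth_mult smooth_diff smooth_fst sN sH smooth_sum smooth_snd_power sKj
        smooth_linear linear_snd) auto
  then show ?thesis unfolding KB_def Kt_def by simp
qed

lemma dKB: "KB l differentiable (at y)"
  using sKB smooth_diff_at by blast

lemma F1: "deriv (\<lambda>E. Kt H N K l h w E) E0 = fd (KB l) ((w, E0), h) ((0, 1), 0)"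
proof -
  have eq: "(\<lambda>E. Kt H N K l h w E) = (\<lambda>t. KB l (((w, 0), h) + t *\<^sub>R ((0, 1), 0)))"
    by (simp add: Kt_KB)
  have "((\<lambda>t. KB l (((w, 0), h) + t *\<^sub>R ((0, 1), 0))) has_real_derivative
      fd (KB l) (((w, 0), h) + E0 *\<^sub>R ((0, 1), 0)) ((0, 1), 0)) (at E0)"
    by (rule LD0[OF dKB])
  then show ?thesis unfolding eq by (simp add: DERIV_imp_deriv)
qed

lemma linear_emb1: "linear (\<lambda>w::'n ph. ((w, 0::real), 0::real))"
  by (auto simp: linear_iff)

lemma F2p: "dp (\<lambda>w. Kt H N K l h w E) w = (\<chi> i. fd (KB l) ((w, E), h) (((0, axis i 1), 0), 0))"
proof -
  have eq: "(\<lambda>w. Kt H N K l h w E) = (\<lambda>w. KB l (((0, E), h) + ((w, 0), 0)))"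
    by (simp add: Kt_KB)
  show ?thesis unfolding dp_def eq
    using fd_affine_eq[OF dKB linear_emb1, where c = "((0, E), h)" and w = w] by simp
qed

lemma F2q: "dq (\<lambda>w. Kt H N K l h w E) w = (\<chi> i. fd (KB l) ((w, E), h) (((axis i 1, 0), 0), 0))"
proof -
  have eq: "(\<lambda>w. Kt H N K l h w E) = (\<lambda>w. KB l (((0, E), h) + ((w, 0), 0)))"
    by (simp add: Kt_KB)
  show ?thesis unfolding dq_def eq
    using fd_affine_eq[OF dKB linear_emb1, where c = "((0, E), h)" and w = w] by simp
qed

lemma linear_emb2: "linear (\<lambda>w::'n ph. (w, 0::real))"
  by (auto simp: linear_iff)

lemma dEtZ: "EtZ H Ec l differentiable (at z)"
  using sEtZ smooth_diff_at by blast

lemma Et_eq: "Et H Ec l h = (\<lambda>w. EtZ H Ec l ((0, h) + (w, 0)))"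
  by (simp add: EtZ_def)

lemma Et_has_deriv: "(Et H Ec l h has_derivative (\<lambda>u. fd (EtZ H Ec l) (w, h) (u, 0))) (at w)"
  using fd_affine[OF dEtZ linear_emb2, where c = "(0, h)" and w = w] by (simp add: Et_eq)

lemma dEt: "Et H Ec l h differentiable (at w)"
  using Et_has_deriv differentiable_def by blast

lemma F4: "fd (Et H Ec l h) w u = fd (EtZ H Ec l) (w, h) (u, 0)"
  using fd_eq[OF Et_has_deriv] by simp

lemma F3: "fd (RZ l) (w, h) (u, 0) = fd (KB l) ((w, Et H Ec l h w), h) ((u, 0), 0)
    + fd (Et H Ec l h) w u * fd (KB l) ((w, Et H Ec l h w), h) ((0, 1), 0)"
proof -
  have dR: "\<And>z. RZ l differentiable (at z)" using sRZ smooth_diff_at by blast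
  have s1: "fd (RZ l) (w, h) (u, 0) = fd (\<lambda>w'. RZ l ((0, h) + (w', 0))) w u"
    using fd_affine_eq[OF dR linear_emb2, where c = "(0, h)" and w = w and u = u] by simp
  have eqR: "(\<lambda>w'. RZ l ((0, h) + (w', 0))) = (\<lambda>w'. KB l ((w', Et H Ec l h w'), h))"
    by (simp add: RZ_def KZ_def KB_def EtZ_def)
  have "((\<lambda>w'. ((w', Et H Ec l h w'), h)) has_derivative (\<lambda>u. ((u, fd (Et H Ec l h) w u), 0))) (at w)"
    using fd_works[OF dEt[of l h w]] by (auto intro!: derivative_eq_intros)
  from diff_chain_at[OF this fd_works[OF dKB]]
  have "((\<lambda>w'. KB l ((w', Et H Ec l h w'), h)) has_derivative
      (\<lambda>u. fd (KB l) ((w, Et H Ec l h w), h) ((u, fd (Et H Ec l h) w u), 0))) (at w)"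
    by (simp add: o_def)
  then have s2: "fd (\<lambda>w'. RZ l ((0, h) + (w', 0))) w u =
      fd (KB l) ((w, Et H Ec l h w), h) ((u, fd (Et H Ec l h) w u), 0)"
    unfolding eqR by (rule fd_eq[THEN fun_cong])
  have lin: "linear (fd (KB l) ((w, Et H Ec l h w), h))" by (rule linear_frechet_derivative[OF dKB])
  define P where "P = ((w, Et H Ec l h w), h)"
  define a where "a = fd (Et H Ec l h) w u"
  have "fd (KB l) P ((u, a), 0) = fd (KB l) P (((u, 0), 0) + a *\<^sub>R ((0, 1), 0))" by simp
  also have "\<dots> = fd (KB l) P ((u, 0), 0) + fd (KB l) P (a *\<^sub>R ((0, 1), 0))"
    using lin unfolding P_def by (rule linear_add)
  also have "\<dots> = fd (KB l) P ((u, 0), 0) + a * fd (KB l) P ((0, 1), 0)"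
    using lin unfolding P_def by (simp only: linear_scale real_scaleR_def)
  finally have "fd (KB l) ((w, Et H Ec l h w), h) ((u, fd (Et H Ec l h) w u), 0) =
      fd (KB l) ((w, Et H Ec l h w), h) ((u, 0), 0) + fd (Et H Ec l h) w u * fd (KB l) ((w, Et H Ec l h w), h) ((0, 1), 0)"
    unfolding P_def a_def .
  then show ?thesis using s1 s2 by simp
qed

lemma psiE0: "fd (KB l) ((w, E), 0) ((0, 1), 0) = - N w"
proof (rule fd_dir_deriv[OF dKB])
  have z: "\<And>f. (\<Sum>j = Suc 0..l. (0::real) ^ j * f j) = 0" by (intro sum.neutral) auto
  have "(\<lambda>t. KB l (((w, E), 0) + t *\<^sub>R ((0, 1), 0))) = (\<lambda>t. N w * (H w - (E + t)))"
    by (simp add: KB_def Kt_def z)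
  moreover have "((\<lambda>t. N w * (H w - (E + t))) has_real_derivative - N w) (at 0)"
    by (auto intro!: derivative_eq_intros)
  ultimately show "((\<lambda>t. KB l (((w, E), 0) + t *\<^sub>R ((0, 1), 0))) has_real_derivative - N w) (at 0)"
    by simp
qed

abbreviation DD where "DD l h w \<equiv> fd (KB l) ((w, Et H Ec l h w), h) ((0, 1), 0)"

lemma mod_field_eq:
  "mod_field H N K Ec l h w = (- DD l h w *\<^sub>R dp (Et H Ec l h) w, DD l h w *\<^sub>R dq (Et H Ec l h) w)"
  unfolding mod_field_def F1 by simp

lemma Nmod_eq: "Nmod H N K Ec l h w = - DD l h w"
  unfolding Nmod_def F1 by simp

lemma ham_field_eq:
  "ham_field (\<lambda>w. Kt H N K l h w E) w =
    ((\<chi> i. fd (KB l) ((w, E), h) (((0, axis i 1), 0), 0)), - (\<chi> i. fd (KB l) ((w, E), h) (((axis i 1, 0), 0), 0)))"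
  unfolding ham_field_def F2p F2q by simp

lemma residual_eq:
  assumes "E = Et H Ec l h w"
  shows "ham_field (\<lambda>w. Kt H N K l h w E) w - mod_field H N K Ec l h w =
    ((\<chi> i. fd (RZ l) (w, h) ((0, axis i 1), 0)), - (\<chi> i. fd (RZ l) (w, h) ((axis i 1, 0), 0)))"
  unfolding ham_field_eq mod_field_eq F3 dp_def dq_def assms
  by (simp add: vec_eq_iff algebra_simps)

lemma g_lip_bound:
  "\<exists>Lg Mg. 0 \<le> Lg \<and> 0 \<le> Mg \<and> (\<forall>h\<in>{0..1}. \<forall>E\<in>{E0-1..E0+1}. \<forall>a\<in>cball x0 1. \<forall>b\<in>cball x0 1.
     norm (ham_field (\<lambda>w. Kt H N K l h w E) a - ham_field (\<lambda>w. Kt H N K l h w E) b) \<le> Lg * norm (a - b)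
     \<and> norm (ham_field (\<lambda>w. Kt H N K l h w E) a) \<le> Mg)"
proof -
  define \<psi> where "\<psi> U y = fd (KB l) y ((U, 0), 0)" for U y
  define Q where "Q = (cball x0 1 \<times> {E0-1..E0+1}) \<times> {0..1::real}"
  have sp: "\<And>U. smooth (\<psi> U)" unfolding \<psi>_def by (intro smooth_fd sKB)
  have cQ: "compact Q" "convex Q" unfolding Q_def
    by (auto intro!: compact_Times convex_Times)
  obtain Lf where Lf: "\<And>U a b. a \<in> Q \<Longrightarrow> b \<in> Q \<Longrightarrow> \<bar>\<psi> U a - \<psi> U b\<bar> \<le> Lf U * norm (a - b)"
  proof -
    have "\<exists>Lf. \<forall>U. \<forall>a\<in>Q. \<forall>b\<in>Q. \<bar>\<psi> U a - \<psi> U b\<bar> \<le> Lf U * norm (a - b)"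
      by (rule smooth_family_lip[of \<psi> Q, OF sp cQ])
    then show ?thesis using that by blast
  qed
  obtain Bf where Bf: "\<And>U z. z \<in> Q \<Longrightarrow> \<bar>\<psi> U z\<bar> \<le> Bf U"
  proof -
    have "\<exists>Bf. \<forall>U. \<forall>z\<in>Q. \<bar>\<psi> U z\<bar> \<le> Bf U"
      by (rule smooth_family_bound[of \<psi> Q, OF sp cQ(1)])
    then show ?thesis using that by blast
  qed
  define Lg where "Lg = (\<Sum>i\<in>UNIV. \<bar>Lf (0, axis i 1)\<bar>) + (\<Sum>i\<in>UNIV. \<bar>Lf (axis i 1, 0)\<bar>)"
  define Mg where "Mg = (\<Sum>i\<in>UNIV. \<bar>Bf (0, axis i 1)\<bar>) + (\<Sum>i\<in>UNIV. \<bar>Bf (axis i 1, 0)\<bar>)"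
  have "0 \<le> Lg" "0 \<le> Mg" unfolding Lg_def Mg_def by (auto intro!: add_nonneg_nonneg sum_nonneg)
  moreover have "norm (ham_field (\<lambda>w. Kt H N K l h w E) a - ham_field (\<lambda>w. Kt H N K l h w E) b) \<le> Lg * norm (a - b)
     \<and> norm (ham_field (\<lambda>w. Kt H N K l h w E) a) \<le> Mg"
    if h: "h \<in> {0..1}" and E: "E \<in> {E0-1..E0+1}" and a: "a \<in> cball x0 1" and b: "b \<in> cball x0 1" for h E a b
  proof
    have aQ: "((a, E), h) \<in> Q" and bQ: "((b, E), h) \<in> Q" using h E a b unfolding Q_def by auto
    have nab: "norm (((a, E), h) - ((b, E), h)) = norm (a - b)" by (simp add: norm_Pair)
    have "ham_field (\<lambda>w. Kt H N K l h w E) a - ham_field (\<lambda>w. Kt H N K l h w E) b =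
      ((\<chi> i. \<psi> (0, axis i 1) ((a, E), h) - \<psi> (0, axis i 1) ((b, E), h)),
       (\<chi> i. \<psi> (axis i 1, 0) ((b, E), h) - \<psi> (axis i 1, 0) ((a, E), h)))" (is "_ = (?P, ?Q)")
      unfolding ham_field_eq \<psi>_def by (simp add: vec_eq_iff)
    moreover have "norm (?P, ?Q) \<le> (\<Sum>i\<in>UNIV. \<bar>?P $ i\<bar>) + (\<Sum>i\<in>UNIV. \<bar>?Q $ i\<bar>)" by (rule norm_vpair_le)
    ultimately have "norm (ham_field (\<lambda>w. Kt H N K l h w E) a - ham_field (\<lambda>w. Kt H N K l h w E) b) \<le>
        (\<Sum>i\<in>UNIV. \<bar>\<psi> (0, axis i 1) ((a, E), h) - \<psi> (0, axis i 1) ((b, E), h)\<bar>) +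
        (\<Sum>i\<in>UNIV. \<bar>\<psi> (axis i 1, 0) ((b, E), h) - \<psi> (axis i 1, 0) ((a, E), h)\<bar>)"
      by simp
    also have "\<dots> \<le> (\<Sum>i\<in>UNIV. \<bar>Lf (0, axis i 1)\<bar> * norm (a - b)) + (\<Sum>i\<in>UNIV. \<bar>Lf (axis i 1, 0)\<bar> * norm (a - b))"
    proof (intro add_mono sum_mono)
      fix i
      show "\<bar>\<psi> (0, axis i 1) ((a, E), h) - \<psi> (0, axis i 1) ((b, E), h)\<bar> \<le> \<bar>Lf (0, axis i 1)\<bar> * norm (a - b)"
        using Lf[OF aQ bQ, of "(0, axis i 1)"] nab by (smt (verit) abs_ge_self mult_right_mono norm_ge_zero)
      show "\<bar>\<psi> (axis i 1, 0) ((b, E), h) - \<psi> (axis i 1, 0) ((a, E), h)\<bar> \<le> \<bar>Lf (axis i 1, 0)\<bar> * norm (a - b)"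
        using Lf[OF aQ bQ, of "(axis i 1, 0)"] nab by (smt (verit) abs_ge_self mult_right_mono norm_ge_zero)
    qed
    also have "\<dots> = Lg * norm (a - b)" unfolding Lg_def by (simp add: sum_distrib_right sum_distrib_left algebra_simps)
    finally show "norm (ham_field (\<lambda>w. Kt H N K l h w E) a - ham_field (\<lambda>w. Kt H N K l h w E) b) \<le> Lg * norm (a - b)" .
    have "ham_field (\<lambda>w. Kt H N K l h w E) a =
      ((\<chi> i. \<psi> (0, axis i 1) ((a, E), h)), (\<chi> i. - \<psi> (axis i 1, 0) ((a, E), h)))" (is "_ = (?P, ?Q)")
      unfolding ham_field_eq \<psi>_def by (simp add: vec_eq_iff)
    moreover have "norm (?P, ?Q) \<le> (\<Sum>i\<in>UNIV. \<bar>?P $ i\<bar>) + (\<Sum>i\<in>UNIV. \<bar>?Q $ i\<bar>)" by (rule norm_vpair_le)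
    ultimately have "norm (ham_field (\<lambda>w. Kt H N K l h w E) a) \<le>
        (\<Sum>i\<in>UNIV. \<bar>\<psi> (0, axis i 1) ((a, E), h)\<bar>) + (\<Sum>i\<in>UNIV. \<bar>\<psi> (axis i 1, 0) ((a, E), h)\<bar>)"
      by simp
    also have "\<dots> \<le> Mg" unfolding Mg_def
      using Bf[OF aQ] by (intro add_mono sum_mono) (smt (verit))+
    finally show "norm (ham_field (\<lambda>w. Kt H N K l h w E) a) \<le> Mg" .
  qed
  ultimately show ?thesis by blast
qed

lemma residual_bound:
  "\<exists>A. 0 \<le> A \<and> (\<forall>h\<in>{0..1}. \<forall>w\<in>cball x0 1. \<forall>E. E = Et H Ec l h w \<longrightarrow>
      norm (ham_field (\<lambda>v. Kt H N K l h v E) w - mod_field H N K Ec l h w) \<le> A * h ^ Suc l)"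
proof -
  have "\<forall>u. \<exists>A. \<forall>w\<in>cball x0 1. \<forall>h. 0 \<le> h \<and> h \<le> 1 \<longrightarrow> \<bar>fd (RZ l) (w, h) (u, 0)\<bar> \<le> A * h ^ Suc l"
    using RZ_grad_bound[of "cball x0 1"] by auto
  then obtain Af where Af: "\<And>u w h. w \<in> cball x0 1 \<Longrightarrow> 0 \<le> h \<Longrightarrow> h \<le> 1 \<Longrightarrow>
      \<bar>fd (RZ l) (w, h) (u, 0)\<bar> \<le> Af u * h ^ Suc l"
    by (metis choice)
  define A where "A = (\<Sum>i\<in>UNIV. \<bar>Af (0, axis i 1)\<bar>) + (\<Sum>i\<in>UNIV. \<bar>Af (axis i 1, 0)\<bar>)"
  have "0 \<le> A" unfolding A_def by (auto intro!: add_nonneg_nonneg sum_nonneg)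
  moreover have "norm (ham_field (\<lambda>v. Kt H N K l h v E) w - mod_field H N K Ec l h w) \<le> A * h ^ Suc l"
    if h: "h \<in> {0..1}" and w: "w \<in> cball x0 1" and E: "E = Et H Ec l h w" for h w E
  proof -
    have "ham_field (\<lambda>v. Kt H N K l h v E) w - mod_field H N K Ec l h w =
      ((\<chi> i. fd (RZ l) (w, h) ((0, axis i 1), 0)), (\<chi> i. - fd (RZ l) (w, h) ((axis i 1, 0), 0)))" (is "_ = (?P, ?Q)")
      using residual_eq[OF E] by (simp add: vec_eq_iff)
    moreover have "norm (?P, ?Q) \<le> (\<Sum>i\<in>UNIV. \<bar>?P $ i\<bar>) + (\<Sum>i\<in>UNIV. \<bar>?Q $ i\<bar>)" by (rule norm_vpair_le)
    ultimately have "norm (ham_field (\<lambda>v. Kt H N K l h v E) w - mod_field H N K Ec l h w) \<le>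
       (\<Sum>i\<in>UNIV. \<bar>fd (RZ l) (w, h) ((0, axis i 1), 0)\<bar>) + (\<Sum>i\<in>UNIV. \<bar>fd (RZ l) (w, h) ((axis i 1, 0), 0)\<bar>)"
      by simp
    also have "\<dots> \<le> (\<Sum>i\<in>UNIV. \<bar>Af (0, axis i 1)\<bar> * h ^ Suc l) + (\<Sum>i\<in>UNIV. \<bar>Af (axis i 1, 0)\<bar> * h ^ Suc l)"
    proof (intro add_mono sum_mono)
      fix i
      have hp: "0 \<le> h ^ Suc l" using h by simp
      show "\<bar>fd (RZ l) (w, h) ((0, axis i 1), 0)\<bar> \<le> \<bar>Af (0, axis i 1)\<bar> * h ^ Suc l"
        using Af[OF w, of h "(0, axis i 1)"] h abs_ge_self[of "Af (0, axis i 1)"] mult_right_mono[OF _ hp]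
        by (smt (verit) atLeastAtMost_iff)
      show "\<bar>fd (RZ l) (w, h) ((axis i 1, 0), 0)\<bar> \<le> \<bar>Af (axis i 1, 0)\<bar> * h ^ Suc l"
        using Af[OF w, of h "(axis i 1, 0)"] h abs_ge_self[of "Af (axis i 1, 0)"] mult_right_mono[OF _ hp]
        by (smt (verit) atLeastAtMost_iff)
    qed
    also have "\<dots> = A * h ^ Suc l" unfolding A_def by (simp add: sum_distrib_right sum_distrib_left algebra_simps)
    finally show ?thesis .
  qed
  ultimately show ?thesis by blast
qed

lemma EtZ_bound: "\<exists>BE. \<forall>w\<in>cball x0 1. \<forall>h\<in>{0..1}. \<bar>Et H Ec l h w\<bar> \<le> BE"
proof -
  obtain BE where "\<forall>z\<in>cball x0 1 \<times> {0..1}. \<bar>EtZ H Ec l z\<bar> \<le> BE"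
    using smooth_bound[OF sEtZ, of "cball x0 1 \<times> {0..1}"] compact_Times[OF compact_cball compact_Icc] by blast
  then show ?thesis by (auto simp: EtZ_def)
qed

lemma f_bound:
  "\<exists>Mf. 0 \<le> Mf \<and> (\<forall>h\<in>{0..1}. \<forall>w\<in>cball x0 1. norm (mod_field H N K Ec l h w) \<le> Mf)"
proof -
  obtain BE where BE: "\<And>w h. w \<in> cball x0 1 \<Longrightarrow> h \<in> {0..1} \<Longrightarrow> \<bar>Et H Ec l h w\<bar> \<le> BE"
    using EtZ_bound by blast
  define Q where "Q = (cball x0 1 \<times> {-BE..BE}) \<times> {0..1::real}"
  have cQ: "compact Q" unfolding Q_def by (auto intro!: compact_Times)
  obtain BD where BD: "\<forall>y\<in>Q. \<bar>fd (KB l) y ((0, 1), 0)\<bar> \<le> BD"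
    using smooth_bound[OF smooth_fd[OF sKB], of Q] cQ by blast
  define \<phi> where "\<phi> U z = fd (EtZ H Ec l) z (U, 0)" for U z
  have sp: "\<And>U. smooth (\<phi> U)" unfolding \<phi>_def by (intro smooth_fd sEtZ)
  have cS: "compact (cball x0 1 \<times> {0..1::real})" by (auto intro!: compact_Times)
  obtain Bf where Bf: "\<And>U z. z \<in> cball x0 1 \<times> {0..1} \<Longrightarrow> \<bar>\<phi> U z\<bar> \<le> Bf U"
  proof -
    have "\<exists>Bf. \<forall>U. \<forall>z\<in>cball x0 1 \<times> {0..1}. \<bar>\<phi> U z\<bar> \<le> Bf U"
      by (rule smooth_family_bound[of \<phi>, OF sp cS])
    then show ?thesis using that by blast
  qed
  define Mf where "Mf = \<bar>BD\<bar> * ((\<Sum>i\<in>UNIV. \<bar>Bf (0, axis i 1)\<bar>) + (\<Sum>i\<in>UNIV. \<bar>Bf (axis i 1, 0)\<bar>))"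
  have "0 \<le> Mf" unfolding Mf_def by (auto intro!: mult_nonneg_nonneg add_nonneg_nonneg sum_nonneg)
  moreover have "norm (mod_field H N K Ec l h w) \<le> Mf" if h: "h \<in> {0..1}" and w: "w \<in> cball x0 1" for h w
  proof -
    have PQ: "((w, Et H Ec l h w), h) \<in> Q" using BE[OF w h] h w unfolding Q_def by (auto simp: abs_le_iff)
    have D: "\<bar>DD l h w\<bar> \<le> \<bar>BD\<bar>" using BD PQ by force
    have zS: "(w, h) \<in> cball x0 1 \<times> {0..1}" using w h by auto
    have "mod_field H N K Ec l h w =
      ((\<chi> i. - DD l h w * \<phi> (0, axis i 1) (w, h)), (\<chi> i. DD l h w * \<phi> (axis i 1, 0) (w, h)))" (is "_ = (?P, ?Q)")
      unfolding mod_field_eq dp_def dq_def \<phi>_def F4 by (simp add: vec_eq_iff)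
    moreover have "norm (?P, ?Q) \<le> (\<Sum>i\<in>UNIV. \<bar>?P $ i\<bar>) + (\<Sum>i\<in>UNIV. \<bar>?Q $ i\<bar>)" by (rule norm_vpair_le)
    ultimately have "norm (mod_field H N K Ec l h w) \<le>
       (\<Sum>i\<in>UNIV. \<bar>DD l h w\<bar> * \<bar>\<phi> (0, axis i 1) (w, h)\<bar>) + (\<Sum>i\<in>UNIV. \<bar>DD l h w\<bar> * \<bar>\<phi> (axis i 1, 0) (w, h)\<bar>)"
      by (simp add: abs_mult)
    also have "\<dots> \<le> (\<Sum>i\<in>UNIV. \<bar>BD\<bar> * \<bar>Bf (0, axis i 1)\<bar>) + (\<Sum>i\<in>UNIV. \<bar>BD\<bar> * \<bar>Bf (axis i 1, 0)\<bar>)"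
    proof (intro add_mono sum_mono mult_mono)
      fix i
      show "\<bar>\<phi> (0, axis i 1) (w, h)\<bar> \<le> \<bar>Bf (0, axis i 1)\<bar>" using Bf[OF zS] abs_ge_self order_trans by blast
      show "\<bar>\<phi> (axis i 1, 0) (w, h)\<bar> \<le> \<bar>Bf (axis i 1, 0)\<bar>" using Bf[OF zS] abs_ge_self order_trans by blast
    qed (use D in auto)
    also have "\<dots> = Mf" unfolding Mf_def by (simp add: sum_distrib_left algebra_simps)
    finally show ?thesis .
  qed
  ultimately show ?thesis by blast
qed

lemma Et_near:
  "\<exists>LE. 0 \<le> LE \<and> (\<forall>x\<in>cball x0 1. \<forall>h\<in>{0..1}. \<bar>Et H Ec l h x - H x0\<bar> \<le> LE * (dist x x0 + h))"
proof -
  have cS: "compact (cball x0 1 \<times> {0..1::real})" "convex (cball x0 1 \<times> {0..1::real})"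
    by (auto intro!: compact_Times convex_Times)
  obtain L where L: "\<forall>a\<in>cball x0 1 \<times> {0..1}. \<forall>b\<in>cball x0 1 \<times> {0..1}. \<bar>EtZ H Ec l a - EtZ H Ec l b\<bar> \<le> L * norm (a - b)"
    using smooth_lipschitz[OF sEtZ cS] by blast
  have z: "\<And>f. (\<Sum>j = Suc 0..l. (0::real) ^ j * f j) = 0" by (intro sum.neutral) auto
  have E0': "Et H Ec l 0 x0 = H x0" by (simp add: Et_def z)
  have E0: "EtZ H Ec l (x0, 0) = H x0" by (simp add: EtZ_def E0')
  have "\<bar>Et H Ec l h x - H x0\<bar> \<le> \<bar>L\<bar> * (dist x x0 + h)" if x: "x \<in> cball x0 1" and h: "h \<in> {0..1}" for x h
  proof -
    have "\<bar>Et H Ec l h x - H x0\<bar> = \<bar>EtZ H Ec l (x, h) - EtZ H Ec l (x0, 0)\<bar>" by (simp add: E0' EtZ_def)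
    also have "\<dots> \<le> L * norm ((x, h) - (x0, 0))"
    proof -
      have "(x, h) \<in> cball x0 1 \<times> {0..1}" "(x0, 0) \<in> cball x0 1 \<times> {0..1::real}" using x h by auto
      then show ?thesis using L by blast
    qed
    also have "\<dots> \<le> \<bar>L\<bar> * norm ((x, h) - (x0, 0))" by (simp add: mult_right_mono)
    also have "\<dots> \<le> \<bar>L\<bar> * (dist x x0 + h)"
    proof (intro mult_left_mono)
      have "norm ((x, h) - (x0, 0)) = norm (x - x0, h)" by simp
      also have "\<dots> \<le> norm (x - x0) + norm h" by (rule norm_pair_le)
      finally show "norm ((x, h) - (x0, 0)) \<le> dist x x0 + h" using h by (simp add: dist_norm)
    qed simp
    finally show ?thesis .
  qed
  then show ?thesis by (intro exI[of _ "\<bar>L\<bar>"]) auto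
qed

lemma Nmod_pos: "\<exists>\<delta>>0. \<forall>h. 0 < h \<and> h < \<delta> \<longrightarrow> (\<forall>w\<in>ball x0 \<delta>. Nmod H N K Ec l h w > 0)"
proof -
  obtain BE where BE: "\<And>w h. w \<in> cball x0 1 \<Longrightarrow> h \<in> {0..1} \<Longrightarrow> \<bar>Et H Ec l h w\<bar> \<le> BE"
    using EtZ_bound by blast
  define Q where "Q = (cball x0 1 \<times> {-BE..BE}) \<times> {0..1::real}"
  have cQ: "compact Q" "convex Q" unfolding Q_def by (auto intro!: compact_Times convex_Times)
  obtain L where L: "\<forall>a\<in>Q. \<forall>b\<in>Q. \<bar>fd (KB l) a ((0, 1), 0) - fd (KB l) b ((0, 1), 0)\<bar> \<le> L * norm (a - b)"
    using smooth_lipschitz[OF smooth_fd[OF sKB] cQ] by blast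
  have "continuous_on (cball x0 1) N" using sN smooth_cont by blast
  then obtain wm where wm: "wm \<in> cball x0 1" "\<And>w. w \<in> cball x0 1 \<Longrightarrow> N wm \<le> N w"
    using continuous_attains_inf[OF compact_cball, of x0 1 N] by auto
  define c0 where "c0 = N wm"
  have c0: "c0 > 0" unfolding c0_def using Npos[rule_format, of wm] .
  define \<delta> where "\<delta> = min 1 (c0 / (\<bar>L\<bar> + 1))"
  have \<delta>: "\<delta> > 0" unfolding \<delta>_def using c0 by auto
  have "Nmod H N K Ec l h w > 0" if h: "0 < h" "h < \<delta>" and w: "w \<in> ball x0 \<delta>" for h w
  proof -
    have w1: "w \<in> cball x0 1" using w \<delta>_def by auto
    have h1: "h \<in> {0..1}" "(0::real) \<in> {0..1}" using h \<delta>_def by auto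
    have PQ: "((w, Et H Ec l h w), h) \<in> Q" "((w, Et H Ec l h w), 0) \<in> Q"
      using BE[OF w1 h1(1)] h1 w1 unfolding Q_def by (auto simp: abs_le_iff)
    have "\<bar>DD l h w - fd (KB l) ((w, Et H Ec l h w), 0) ((0, 1), 0)\<bar> \<le> L * norm (((w, Et H Ec l h w), h) - ((w, Et H Ec l h w), 0))"
      using L PQ by blast
    also have "\<dots> = L * h" using h by (simp add: norm_Pair)
    also have "\<dots> \<le> \<bar>L\<bar> * h" using h by (simp add: mult_right_mono)
    finally have "\<bar>DD l h w + N w\<bar> \<le> \<bar>L\<bar> * h" by (simp add: psiE0)
    moreover have "\<bar>L\<bar> * h < c0"
    proof -
      have "h < c0 / (\<bar>L\<bar> + 1)" using h \<delta>_def by auto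
      then have "h * (\<bar>L\<bar> + 1) < c0" by (simp add: field_simps)
      then show ?thesis using h by (simp add: algebra_simps)
    qed
    moreover have "c0 \<le> N w" using wm w1 c0_def by auto
    ultimately have "- DD l h w > 0" by linarith
    then show ?thesis by (simp add: Nmod_eq)
  qed
  then show ?thesis using \<delta> by blast
qed

lemma conserve:
  assumes sol: "solves_on (mod_field H N K Ec l h) y {t..t+h}" and s: "s \<in> {t..t+h}"
  shows "Et H Ec l h (y s) = Et H Ec l h (y t)"
proof -
  have "((\<lambda>\<sigma>. Et H Ec l h (y \<sigma>)) has_vector_derivative 0) (at \<sigma> within {t..t+h})"
    if \<sigma>: "\<sigma> \<in> {t..t+h}" for \<sigma>
  proof -
    have dy: "(y has_vector_derivative mod_field H N K Ec l h (y \<sigma>)) (at \<sigma> within {t..t+h})"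
      using sol \<sigma> unfolding solves_on_def by blast
    have dE: "(Et H Ec l h has_derivative fd (Et H Ec l h) (y \<sigma>)) (at (y \<sigma>) within y ` {t..t+h})"
      using fd_works[OF dEt] has_derivative_at_withinI by blast
    have "fd (Et H Ec l h) (y \<sigma>) (mod_field H N K Ec l h (y \<sigma>)) = 0"
      unfolding mod_field_eq fd_pair_basis[OF dEt]
      by (simp add: inner_commute)
    with vector_derivative_diff_chain_within[OF dy dE] show ?thesis by (simp add: o_def)
  qed
  then obtain c where "\<And>\<sigma>. \<sigma> \<in> {t..t+h} \<Longrightarrow> Et H Ec l h (y \<sigma>) = c"
    using has_vector_derivative_zero_constant[of "{t..t+h}" "\<lambda>\<sigma>. Et H Ec l h (y \<sigma>)"] by auto
  moreover have "t \<in> {t..t+h}" using s by auto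
  ultimately show ?thesis using s by metis
qed

lemma part1:
  assumes imh: "is_modified_hamiltonian H N K Psi"
  shows "\<exists>C \<delta>. \<delta> > 0 \<and>
            (\<forall>h x t y. 0 < h \<and> h < \<delta> \<and> dist x x0 < \<delta> \<and>
               solves_on (mod_field H N K Ec l h) y {t..t+h} \<and> y t = x \<longrightarrow>
               norm (Psi h (Et H Ec l h x) x - y (t + h)) \<le> C * h ^ (l + 2))"
proof -
  define E0 where "E0 = H x0"
  obtain C1 \<delta>1 where \<delta>1: "\<delta>1 > 0" and C1: "\<And>h x E t y. 0 < h \<Longrightarrow> h < \<delta>1 \<Longrightarrow> dist x x0 < \<delta>1 \<Longrightarrow>
      \<bar>E - E0\<bar> < \<delta>1 \<Longrightarrow> solves_on (ham_field (\<lambda>w. Kt H N K l h w E)) y {t..t+h} \<Longrightarrow> y t = x \<Longrightarrow>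
      norm (Psi h E x - y (t + h)) \<le> C1 * h ^ (l + 2)"
    using imh unfolding is_modified_hamiltonian_def by meson
  obtain Lg Mg where LgMg: "0 \<le> Lg" "0 \<le> Mg" and gLM: "\<And>h E a b. h \<in> {0..1} \<Longrightarrow> E \<in> {E0-1..E0+1} \<Longrightarrow>
      a \<in> cball x0 1 \<Longrightarrow> b \<in> cball x0 1 \<Longrightarrow>
      norm (ham_field (\<lambda>w. Kt H N K l h w E) a - ham_field (\<lambda>w. Kt H N K l h w E) b) \<le> Lg * norm (a - b)
      \<and> norm (ham_field (\<lambda>w. Kt H N K l h w E) a) \<le> Mg"
    using g_lip_bound[of E0 x0 l] by blast
  obtain A where A0: "0 \<le> A" and Ab: "\<And>h w E. h \<in> {0..1} \<Longrightarrow> w \<in> cball x0 1 \<Longrightarrow> E = Et H Ec l h w \<Longrightarrow>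
      norm (ham_field (\<lambda>v. Kt H N K l h v E) w - mod_field H N K Ec l h w) \<le> A * h ^ Suc l"
    using residual_bound[of x0 l] by blast
  obtain Mf where Mf0: "0 \<le> Mf" and Mf: "\<And>h w. h \<in> {0..1} \<Longrightarrow> w \<in> cball x0 1 \<Longrightarrow> norm (mod_field H N K Ec l h w) \<le> Mf"
    using f_bound[of x0 l] by blast
  obtain LE where LE0: "0 \<le> LE" and LE: "\<And>x h. x \<in> cball x0 1 \<Longrightarrow> h \<in> {0..1} \<Longrightarrow> \<bar>Et H Ec l h x - H x0\<bar> \<le> LE * (dist x x0 + h)"
    using Et_near[of x0 l] by blast
  define \<eta> where "\<eta> = min 1 \<delta>1"
  have \<eta>: "0 < \<eta>" "\<eta> \<le> 1" "\<eta> \<le> \<delta>1" unfolding \<eta>_def using \<delta>1 by auto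
  define \<delta> where "\<delta> = min (min (1/4) \<delta>1) (min (1 / (4 * (Mf + 1))) (min (1 / (4 * (Mg + 1))) (min (1 / (2 * (Lg + 1))) (\<eta> / (2 * (LE + 1))))))"
  have \<delta>0: "\<delta> > 0" unfolding \<delta>_def using \<delta>1 Mf0 LgMg LE0 \<eta> by auto
  have "norm (Psi h (Et H Ec l h x) x - y (t + h)) \<le> (C1 + 2 * A) * h ^ (l + 2)"
    if h: "0 < h" "h < \<delta>" and x: "dist x x0 < \<delta>" and sol: "solves_on (mod_field H N K Ec l h) y {t..t+h}"
      and yt: "y t = x" for h x t y
  proof -
    have h1: "h \<in> {0..1}" "h < 1/4" "h < \<delta>1" using h unfolding \<delta>_def by auto
    have hMf: "h * (4 * (Mf + 1)) < 1" using h Mf0 unfolding \<delta>_def by (auto simp: field_simps)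
    have hMg: "h * (4 * (Mg + 1)) < 1" using h LgMg unfolding \<delta>_def by (auto simp: field_simps)
    have hLg: "h * (2 * (Lg + 1)) < 1" using h LgMg unfolding \<delta>_def by (auto simp: field_simps)
    have hLE: "h * (2 * (LE + 1)) < \<eta>" using h LE0 unfolding \<delta>_def by (auto simp: field_simps)
    have xLE: "dist x x0 * (2 * (LE + 1)) < \<eta>" using x LE0 unfolding \<delta>_def by (auto simp: field_simps)
    have x1: "dist x x0 < 1/4" "dist x x0 < \<delta>1" using x unfolding \<delta>_def by auto
    have xc: "x \<in> cball x0 1" using x1 by (simp add: dist_commute)
    define Es where "Es = Et H Ec l h x"
    have "\<bar>Es - E0\<bar> \<le> LE * (dist x x0 + h)" unfolding Es_def E0_def by (rule LE[OF xc h1(1)])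
    also have "\<dots> < \<eta>"
    proof -
      have "LE * (dist x x0 + h) \<le> (LE + 1) * (dist x x0 + h)" using h by (intro mult_right_mono) auto
      also have "\<dots> < \<eta>" using hLE xLE by (simp add: algebra_simps)
      finally show ?thesis .
    qed
    finally have Es: "\<bar>Es - E0\<bar> < \<eta>" .
    have EsR: "Es \<in> {E0-1..E0+1}" using Es \<eta> by (auto simp: abs_less_iff)
    have stay: "\<forall>s\<in>{t..t+h}. dist x0 (y s) < 1"
    proof (rule stay_in_ball[OF sol _ _ _ Mf0])
      show "0 \<le> h" using h by simp
      show "\<And>w. w \<in> cball x0 1 \<Longrightarrow> norm (mod_field H N K Ec l h w) \<le> Mf" using Mf h1 by blast
      have "h * Mf < 1/4" proof -
        have "4 * (h * Mf) + 4 * h < 1" using hMf by (simp add: algebra_simps)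
        then show ?thesis using h by linarith
      qed
      then show "dist x0 (y t) + h * Mf < 1" using x1 yt by (simp add: dist_commute)
    qed
    define g where "g = ham_field (\<lambda>w. Kt H N K l h w Es)"
    obtain z where z: "solves_on g z {t..t+h}" "z t = x" "\<forall>s\<in>{t..t+h}. z s \<in> cball x0 1"
    proof -
      have "\<exists>z. solves_on g z {t..t+h} \<and> z t = x \<and> (\<forall>s\<in>{t..t+h}. z s \<in> cball x0 1)"
      proof (rule picard[where L = Lg and M = Mg])
        show "\<And>a b. a \<in> cball x0 1 \<Longrightarrow> b \<in> cball x0 1 \<Longrightarrow> norm (g a - g b) \<le> Lg * norm (a - b)"
          using gLM[OF h1(1) EsR] unfolding g_def by blast
        show "\<And>a. a \<in> cball x0 1 \<Longrightarrow> norm (g a) \<le> Mg"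
          using gLM[OF h1(1) EsR] unfolding g_def by blast
        have "h * Mg \<le> 1/4" proof -
          have "4 * (h * Mg) + 4 * h < 1" using hMg by (simp add: algebra_simps)
          then show ?thesis using h by linarith
        qed
        then show "dist x0 x + h * Mg \<le> 1" using x1 by (simp add: dist_commute)
        show "0 < h" by (rule h)
        show "0 \<le> Lg" "0 \<le> Mg" by (rule LgMg)+
        show "h * Lg \<le> 1/2" proof -
          have "2 * (h * Lg) + 2 * h < 1" using hLg by (simp add: algebra_simps)
          then show ?thesis using h by linarith
        qed
      qed
      then show ?thesis using that by blast
    qed
    have cmp: "norm (y (t+h) - z (t+h)) \<le> 2 * h * (A * h ^ Suc l)"
    proof (rule compare[OF sol z(1) _ _ _ _ LgMg(1)])
      show "0 \<le> h" using h by simp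
      show "y t = z t" using yt z(2) by simp
      show "\<And>s. s \<in> {t..t+h} \<Longrightarrow> y s \<in> cball x0 1 \<and> z s \<in> cball x0 1"
        using stay z(3) by (auto simp: less_imp_le)
      show "\<And>a b. a \<in> cball x0 1 \<Longrightarrow> b \<in> cball x0 1 \<Longrightarrow> norm (g a - g b) \<le> Lg * norm (a - b)"
        using gLM[OF h1(1) EsR] unfolding g_def by blast
      show "h * Lg \<le> 1/2" proof -
          have "2 * (h * Lg) + 2 * h < 1" using hLg by (simp add: algebra_simps)
          then show ?thesis using h by linarith
        qed
      fix s assume s: "s \<in> {t..t+h}"
      have ys: "y s \<in> cball x0 1" using stay s by (auto simp: less_imp_le)
      have "Es = Et H Ec l h (y s)" unfolding Es_def using conserve[OF sol s] yt by simp
      from Ab[OF h1(1) ys this]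
      have "norm (g (y s) - mod_field H N K Ec l h (y s)) \<le> A * h ^ Suc l" unfolding g_def .
      then show "norm (mod_field H N K Ec l h (y s) - g (y s)) \<le> A * h ^ Suc l"
        by (simp add: norm_minus_commute)
    qed
    have psi: "norm (Psi h Es x - z (t + h)) \<le> C1 * h ^ (l + 2)"
    proof (rule C1[where h=h and x=x and E=Es and t=t and y=z, OF h(1) h1(3) x1(2) _ _ z(2)])
      show "\<bar>Es - E0\<bar> < \<delta>1" using Es \<eta> by simp
      show "solves_on (ham_field (\<lambda>w. Kt H N K l h w Es)) z {t..t+h}" using z(1) unfolding g_def .
    qed
    have "norm (Psi h Es x - y (t + h)) \<le> norm (Psi h Es x - z (t + h)) + norm (y (t+h) - z (t+h))"
      by (rule norm_diff_triangle_le[where y = "z (t+h)"]) (simp_all add: norm_minus_commute)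
    also have "\<dots> \<le> C1 * h ^ (l + 2) + 2 * A * h ^ (l + 2)"
      using psi cmp by (simp add: algebra_simps)
    finally show ?thesis unfolding Es_def by (simp add: algebra_simps)
  qed
  then show ?thesis using \<delta>0 by blast
qed

lemma part2:
  "\<exists>\<delta>>0. \<forall>h. 0 < h \<and> h < \<delta> \<longrightarrow>
     conf_hamiltonian_on (mod_field H N K Ec l h) (Et H Ec l h) (Nmod H N K Ec l h) (ball x0 \<delta>)"
proof -
  obtain \<delta> where \<delta>: "\<delta> > 0" "\<And>h w. 0 < h \<Longrightarrow> h < \<delta> \<Longrightarrow> w \<in> ball x0 \<delta> \<Longrightarrow> Nmod H N K Ec l h w > 0"
    using Nmod_pos[of x0 l] by blast
  have "conf_hamiltonian_on (mod_field H N K Ec l h) (Et H Ec l h) (Nmod H N K Ec l h) (ball x0 \<delta>)"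
    if "0 < h" "h < \<delta>" for h
    unfolding conf_hamiltonian_on_def using \<delta>(2)[OF that] by (simp add: mod_field_eq Nmod_eq)
  then show ?thesis using \<delta>(1) by blast
qed

end

theorem theorem4p2:
  fixes H N :: "(real^'n) \<times> (real^'n) \<Rightarrow> real"
    and K :: "nat \<Rightarrow> (real^'n) \<times> (real^'n) \<Rightarrow> real \<Rightarrow> real"
    and Psi :: "real \<Rightarrow> real \<Rightarrow> (real^'n) \<times> (real^'n) \<Rightarrow> (real^'n) \<times> (real^'n)"
    and Ec :: "nat \<Rightarrow> (real^'n) \<times> (real^'n) \<Rightarrow> real"
    and l :: nat
  assumes "smooth H" and "smooth N" and "\<forall>x. N x > 0"
    and "\<forall>j\<ge>1. smooth (\<lambda>z::((real^'n) \<times> (real^'n)) \<times> real. K j (fst z) (snd z))"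
    and "symplectic_integrator H N Psi"
    and "is_modified_hamiltonian H N K Psi"
    and "modified_conformal_hamiltonian H N K Ec"
  shows "(\<forall>x0. \<exists>C \<delta>. \<delta> > 0 \<and>
            (\<forall>h x t y. 0 < h \<and> h < \<delta> \<and> dist x x0 < \<delta> \<and>
               solves_on (mod_field H N K Ec l h) y {t..t+h} \<and> y t = x \<longrightarrow>
               norm (Psi h (Et H Ec l h x) x - y (t + h)) \<le> C * h ^ (l + 2)))
       \<and> (\<forall>x0. \<exists>\<delta>>0. \<forall>h. 0 < h \<and> h < \<delta> \<longrightarrow>
            conf_hamiltonian_on (mod_field H N K Ec l h) (Et H Ec l h) (Nmod H N K Ec l h) (ball x0 \<delta>))"
proof -
  interpret prob H N K Ec
    using assms by unfold_locales auto
  show ?thesis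
    using part1[OF assms(6)] part2 by blast
qed


end
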